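(* Let $\mathcal{A}\text{-Sch}$ be the category of $\mathcal{A}$-schemes over the algebraic system of rings, and let $\mathbf{LRCoh}$ be the category of locally ringed spaces whose underlying space is coherent, with morphisms the morphisms of locally ringed spaces whose underlying continuous map is quasi-compact. Then for every $\mathcal{A}$-scheme $(X,\mathcal{O}_X,\beta_X)$, the ringed space $(X,\mathcal{O}_X)$ is locally ringed, every morphism of $\mathcal{A}$-schemes is a morphism of locally ringed spaces, so $(X,\mathcal{O}_X,\beta_X)\mapsto(X,\mathcal{O}_X)$ defines a functor $\mathcal{A}\text{-Sch}\to\mathbf{LRCoh}$; moreover this functor is fully faithful.
   Context: All rings are commutative with $1$. A topological space is coherent if it is sober (every irreducible closed subset has a unique generic point), quasi-compact, quasi-separated (intersections of two quasi-compact opens are quasi-compact) and has a basis of quasi-compact opens; a continuous map of coherent spaces is quasi-compact if preimages of quasi-compact opens are quasi-compact. For a coherent space $U$, $C(U)_{\mathrm{cpt}}$ is the set of closed subsets of $U$ with quasi-compact complement. For a ring $R$, $\alpha_1(R)$ is the set of finitely generated ideals of $R$ modulo the equivalence relation generated by $I\cdot I\sim I$, and $\alpha_2(a)$ denotes the class of the principal ideal $(a)$. An $\mathcal{A}$-scheme is a triple $(X,\mathcal{O}_X,\beta_X)$ where $X$ is a coherent space, $\mathcal{O}_X$ is a sheaf of rings on $X$, and $\beta_X$ (the support morphism) is a family of maps $\beta_X:\alpha_1(\mathcal{O}_X(U))\to C(U)_{\mathrm{cpt}}$ for quasi-compact open $U$, compatible with restrictions, with $\beta_X(I+J)=\beta_X(I)\cap\beta_X(J)$,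 $\beta_X(IJ)=\beta_X(I)\cup\beta_X(J)$, $\beta_X(0)=U$, $\beta_X(\mathcal{O}_X(U))=\emptyset$; it must satisfy: whenever $V\subset U$ are quasi-compact open and $a\in\mathcal{O}_X(U)$ satisfies $\beta_X(\alpha_2(a))\subset U\setminus V$, then $a|_V$ is invertible in $\mathcal{O}_X(V)$ ("restrictions reflect localizations"). A morphism $f:X\to Y$ of $\mathcal{A}$-schemes is a pair $(|f|,f^{\#})$ where $|f|$ is a quasi-compact continuous map and $f^{\#}:\mathcal{O}_Y\to|f|_*\mathcal{O}_X$ is a morphism of sheaves of rings with $\beta_X(f^{\#}(I))=|f|^{-1}(\beta_Y(I))$ for all finitely generated ideals $I$ of sections of $\mathcal{O}_Y$ over quasi-compact opens. *)

theory Defs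
  imports "HOL-Analysis.Abstract_Topology" "HOL-Algebra.Ideal_Product"
begin

definition irreducible_closed :: "'a topology \<Rightarrow> 'a set \<Rightarrow> bool" where
  "irreducible_closed X Z \<longleftrightarrow> closedin X Z \<and> Z \<noteq> {} \<and>
     (\<forall>A B. closedin X A \<and> closedin X B \<and> Z \<subseteq> A \<union> B \<longrightarrow> Z \<subseteq> A \<or> Z \<subseteq> B)"

definition sober_space :: "'a topology \<Rightarrow> bool" where
  "sober_space X \<longleftrightarrow> (\<forall>Z. irreducible_closed X Z \<longrightarrow>
      (\<exists>!x. x \<in> topspace X \<and> X closure_of {x} = Z))"

definition qc_open :: "'a topology \<Rightarrow> 'a set \<Rightarrow> bool" where
  "qc_open X U \<longleftrightarrow> openin X U \<and> compactin X U"

definition coherent_space :: "'a topology \<Rightarrow> bool" where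
  "coherent_space X \<longleftrightarrow> sober_space X \<and> compact_space X \<and>
     (\<forall>U V. qc_open X U \<and> qc_open X V \<longrightarrow> compactin X (U \<inter> V)) \<and>
     (\<forall>U x. openin X U \<and> x \<in> U \<longrightarrow> (\<exists>W. qc_open X W \<and> x \<in> W \<and> W \<subseteq> U))"

definition quasi_compact_map :: "'a topology \<Rightarrow> 'b topology \<Rightarrow> ('a \<Rightarrow> 'b) \<Rightarrow> bool" where
  "quasi_compact_map X Y f \<longleftrightarrow> continuous_map X Y f \<and>
     (\<forall>V. qc_open Y V \<longrightarrow> compactin X (f -` V \<inter> topspace X))"

definition C_cpt :: "'a topology \<Rightarrow> 'a set \<Rightarrow> 'a set set" where
  "C_cpt X U = {Z. closedin (subtopology X U) Z \<and> compactin X (U - Z)}"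

definition presheaf_of_crings ::
  "'a topology \<Rightarrow> ('a set \<Rightarrow> 'r ring) \<Rightarrow> ('a set \<Rightarrow> 'a set \<Rightarrow> 'r \<Rightarrow> 'r) \<Rightarrow> bool" where
  "presheaf_of_crings X S \<rho> \<longleftrightarrow>
     (\<forall>U. openin X U \<longrightarrow> cring (S U)) \<and>
     (\<forall>U V. openin X U \<and> openin X V \<and> V \<subseteq> U \<longrightarrow> \<rho> U V \<in> ring_hom (S U) (S V)) \<and>
     (\<forall>U. openin X U \<longrightarrow> (\<forall>s\<in>carrier (S U). \<rho> U U s = s)) \<and>
     (\<forall>U V W. openin X U \<and> openin X V \<and> openin X W \<and> W \<subseteq> V \<and> V \<subseteq> U \<longrightarrow>
        (\<forall>s\<in>carrier (S U). \<rho> V W (\<rho> U V s) = \<rho> U W s))"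

definition sheaf_of_crings ::
  "'a topology \<Rightarrow> ('a set \<Rightarrow> 'r ring) \<Rightarrow> ('a set \<Rightarrow> 'a set \<Rightarrow> 'r \<Rightarrow> 'r) \<Rightarrow> bool" where
  "sheaf_of_crings X S \<rho> \<longleftrightarrow> presheaf_of_crings X S \<rho> \<and>
     (\<forall>U \<U>. openin X U \<and> (\<forall>W\<in>\<U>. openin X W) \<and> \<Union>\<U> = U \<longrightarrow>
        (\<forall>s\<in>carrier (S U). \<forall>t\<in>carrier (S U). (\<forall>W\<in>\<U>. \<rho> U W s = \<rho> U W t) \<longrightarrow> s = t) \<and>
        (\<forall>\<sigma>. (\<forall>W\<in>\<U>. \<sigma> W \<in> carrier (S W)) \<and>
              (\<forall>W1\<in>\<U>. \<forall>W2\<in>\<U>. \<rho> W1 (W1 \<inter> W2) (\<sigma> W1) = \<rho> W2 (W1 \<inter> W2) (\<sigma> W2)) \<longrightarrow>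
              (\<exists>s\<in>carrier (S U). \<forall>W\<in>\<U>. \<rho> U W s = \<sigma> W)))"

definition ringed_space_morphism ::
  "'a topology \<Rightarrow> ('a set \<Rightarrow> 'r ring) \<Rightarrow> ('a set \<Rightarrow> 'a set \<Rightarrow> 'r \<Rightarrow> 'r) \<Rightarrow>
   'b topology \<Rightarrow> ('b set \<Rightarrow> 's ring) \<Rightarrow> ('b set \<Rightarrow> 'b set \<Rightarrow> 's \<Rightarrow> 's) \<Rightarrow>
   ('a \<Rightarrow> 'b) \<Rightarrow> ('b set \<Rightarrow> 's \<Rightarrow> 'r) \<Rightarrow> bool" where
  "ringed_space_morphism X OX \<rho>X Y OY \<rho>Y f \<phi> \<longleftrightarrow>
     continuous_map X Y f \<and>
     (\<forall>V. openin Y V \<longrightarrow> \<phi> V \<in> ring_hom (OY V) (OX (f -` V \<inter> topspace X))) \<and>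
     (\<forall>V W. openin Y V \<and> openin Y W \<and> W \<subseteq> V \<longrightarrow>
        (\<forall>t\<in>carrier (OY V). \<phi> W (\<rho>Y V W t) =
            \<rho>X (f -` V \<inter> topspace X) (f -` W \<inter> topspace X) (\<phi> V t)))"

definition germ_pairs :: "'a topology \<Rightarrow> ('a set \<Rightarrow> 'r ring) \<Rightarrow> 'a \<Rightarrow> ('a set \<times> 'r) set" where
  "germ_pairs X S x = {(U, s). openin X U \<and> x \<in> U \<and> s \<in> carrier (S U)}"

definition germ_rel ::
  "'a topology \<Rightarrow> ('a set \<Rightarrow> 'r ring) \<Rightarrow> ('a set \<Rightarrow> 'a set \<Rightarrow> 'r \<Rightarrow> 'r) \<Rightarrow> 'a \<Rightarrow> ('a set \<times> 'r) rel" where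
  "germ_rel X S \<rho> x = {((U, s), (V, t)). (U, s) \<in> germ_pairs X S x \<and> (V, t) \<in> germ_pairs X S x \<and>
      (\<exists>W. openin X W \<and> x \<in> W \<and> W \<subseteq> U \<inter> V \<and> \<rho> U W s = \<rho> V W t)}"

definition germ ::
  "'a topology \<Rightarrow> ('a set \<Rightarrow> 'r ring) \<Rightarrow> ('a set \<Rightarrow> 'a set \<Rightarrow> 'r \<Rightarrow> 'r) \<Rightarrow> 'a \<Rightarrow> 'a set \<Rightarrow> 'r \<Rightarrow> ('a set \<times> 'r) set" where
  "germ X S \<rho> x U s = germ_rel X S \<rho> x `` {(U, s)}"

definition stalk ::
  "'a topology \<Rightarrow> ('a set \<Rightarrow> 'r ring) \<Rightarrow> ('a set \<Rightarrow> 'a set \<Rightarrow> 'r \<Rightarrow> 'r) \<Rightarrow> 'a \<Rightarrow> ('a set \<times> 'r) set ring" where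
  "stalk X S \<rho> x =
    \<lparr> carrier = germ_pairs X S x // germ_rel X S \<rho> x,
      mult = (\<lambda>A B. case (SOME p. p \<in> A, SOME q. q \<in> B) of ((U, s), (V, t)) \<Rightarrow>
                germ X S \<rho> x (U \<inter> V) (\<rho> U (U \<inter> V) s \<otimes>\<^bsub>S (U \<inter> V)\<^esub> \<rho> V (U \<inter> V) t)),
      one = germ X S \<rho> x (topspace X) \<one>\<^bsub>S (topspace X)\<^esub>,
      zero = germ X S \<rho> x (topspace X) \<zero>\<^bsub>S (topspace X)\<^esub>,
      add = (\<lambda>A B. case (SOME p. p \<in> A, SOME q. q \<in> B) of ((U, s), (V, t)) \<Rightarrow>
                germ X S \<rho> x (U \<inter> V) (\<rho> U (U \<inter> V) s \<oplus>\<^bsub>S (U \<inter> V)\<^esub> \<rho> V (U \<inter> V) t)) \<rparr>"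

definition stalk_map ::
  "'a topology \<Rightarrow> ('a set \<Rightarrow> 'r ring) \<Rightarrow> ('a set \<Rightarrow> 'a set \<Rightarrow> 'r \<Rightarrow> 'r) \<Rightarrow>
   ('a \<Rightarrow> 'b) \<Rightarrow> ('b set \<Rightarrow> 's \<Rightarrow> 'r) \<Rightarrow> 'a \<Rightarrow> ('b set \<times> 's) set \<Rightarrow> ('a set \<times> 'r) set" where
  "stalk_map X OX \<rho>X f \<phi> x = (\<lambda>A. case SOME p. p \<in> A of (V, t) \<Rightarrow>
      germ X OX \<rho>X x (f -` V \<inter> topspace X) (\<phi> V t))"

definition local_ring :: "('r, 'm) ring_scheme \<Rightarrow> bool" where
  "local_ring R \<longleftrightarrow> cring R \<and> (\<exists>!M. maximalideal M R)"

definition max_ideal :: "('r, 'm) ring_scheme \<Rightarrow> 'r set" where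
  "max_ideal R = (THE M. maximalideal M R)"

definition local_ring_hom :: "('r, 'm) ring_scheme \<Rightarrow> ('s, 'n) ring_scheme \<Rightarrow> ('r \<Rightarrow> 's) \<Rightarrow> bool" where
  "local_ring_hom A B h \<longleftrightarrow> h \<in> ring_hom A B \<and> h ` max_ideal A \<subseteq> max_ideal B"

definition locally_ringed_space ::
  "'a topology \<Rightarrow> ('a set \<Rightarrow> 'r ring) \<Rightarrow> ('a set \<Rightarrow> 'a set \<Rightarrow> 'r \<Rightarrow> 'r) \<Rightarrow> bool" where
  "locally_ringed_space X S \<rho> \<longleftrightarrow> sheaf_of_crings X S \<rho> \<and>
     (\<forall>x\<in>topspace X. local_ring (stalk X S \<rho> x))"

definition LRCoh_object ::
  "'a topology \<Rightarrow> ('a set \<Rightarrow> 'r ring) \<Rightarrow> ('a set \<Rightarrow> 'a set \<Rightarrow> 'r \<Rightarrow> 'r) \<Rightarrow> bool" where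
  "LRCoh_object X S \<rho> \<longleftrightarrow> coherent_space X \<and> locally_ringed_space X S \<rho>"

definition LRCoh_morphism ::
  "'a topology \<Rightarrow> ('a set \<Rightarrow> 'r ring) \<Rightarrow> ('a set \<Rightarrow> 'a set \<Rightarrow> 'r \<Rightarrow> 'r) \<Rightarrow>
   'b topology \<Rightarrow> ('b set \<Rightarrow> 's ring) \<Rightarrow> ('b set \<Rightarrow> 'b set \<Rightarrow> 's \<Rightarrow> 's) \<Rightarrow>
   ('a \<Rightarrow> 'b) \<Rightarrow> ('b set \<Rightarrow> 's \<Rightarrow> 'r) \<Rightarrow> bool" where
  "LRCoh_morphism X OX \<rho>X Y OY \<rho>Y f \<phi> \<longleftrightarrow>
     quasi_compact_map X Y f \<and> ringed_space_morphism X OX \<rho>X Y OY \<rho>Y f \<phi> \<and>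
     (\<forall>x\<in>topspace X. local_ring_hom (stalk Y OY \<rho>Y (f x)) (stalk X OX \<rho>X x)
                                      (stalk_map X OX \<rho>X f \<phi> x))"

definition fg_ideal :: "('r, 'm) ring_scheme \<Rightarrow> 'r set \<Rightarrow> bool" where
  "fg_ideal R I \<longleftrightarrow> ideal I R \<and> (\<exists>G. finite G \<and> G \<subseteq> carrier R \<and> I = Idl\<^bsub>R\<^esub> G)"

text \<open>The equivalence relation on finitely generated ideals generated by \<open>I\<cdot>I \<sim> I\<close>;
  \<open>\<alpha>\<^sub>1(R)\<close> is the quotient of the f.g. ideals by it.\<close>
definition alpha1_rel :: "('r, 'm) ring_scheme \<Rightarrow> 'r set rel" where
  "alpha1_rel R = (let r = {(ideal_prod R I I, I) | I. fg_ideal R I} in (r \<union> r\<inverse>)\<^sup>*)"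

text \<open>Support morphism \<open>\<beta> U\<close>, given on representatives (finitely generated ideals of \<open>O U\<close>).\<close>
definition A_scheme ::
  "'a topology \<Rightarrow> ('a set \<Rightarrow> 'r ring) \<Rightarrow> ('a set \<Rightarrow> 'a set \<Rightarrow> 'r \<Rightarrow> 'r) \<Rightarrow> ('a set \<Rightarrow> 'r set \<Rightarrow> 'a set) \<Rightarrow> bool" where
  "A_scheme X S \<rho> \<beta> \<longleftrightarrow> coherent_space X \<and> sheaf_of_crings X S \<rho> \<and>
     (\<forall>U. qc_open X U \<longrightarrow>
        (\<forall>I. fg_ideal (S U) I \<longrightarrow> \<beta> U I \<in> C_cpt X U) \<and>
        (\<forall>I J. fg_ideal (S U) I \<and> fg_ideal (S U) J \<and> (I, J) \<in> alpha1_rel (S U) \<longrightarrow> \<beta> U I = \<beta> U J) \<and>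
        (\<forall>I J. fg_ideal (S U) I \<and> fg_ideal (S U) J \<longrightarrow>
            \<beta> U (set_add (S U) I J) = \<beta> U I \<inter> \<beta> U J \<and>
            \<beta> U (ideal_prod (S U) I J) = \<beta> U I \<union> \<beta> U J) \<and>
        \<beta> U {\<zero>\<^bsub>S U\<^esub>} = U \<and>
        \<beta> U (carrier (S U)) = {} \<and>
        (\<forall>V. qc_open X V \<and> V \<subseteq> U \<longrightarrow>
           (\<forall>I. fg_ideal (S U) I \<longrightarrow> \<beta> V (Idl\<^bsub>S V\<^esub> (\<rho> U V ` I)) = \<beta> U I \<inter> V) \<and>
           (\<forall>a\<in>carrier (S U). \<beta> U (PIdl\<^bsub>S U\<^esub> a) \<subseteq> U - V \<longrightarrow> \<rho> U V a \<in> Units (S V))))"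

definition A_scheme_morphism ::
  "'a topology \<Rightarrow> ('a set \<Rightarrow> 'r ring) \<Rightarrow> ('a set \<Rightarrow> 'a set \<Rightarrow> 'r \<Rightarrow> 'r) \<Rightarrow> ('a set \<Rightarrow> 'r set \<Rightarrow> 'a set) \<Rightarrow>
   'b topology \<Rightarrow> ('b set \<Rightarrow> 's ring) \<Rightarrow> ('b set \<Rightarrow> 'b set \<Rightarrow> 's \<Rightarrow> 's) \<Rightarrow> ('b set \<Rightarrow> 's set \<Rightarrow> 'b set) \<Rightarrow>
   ('a \<Rightarrow> 'b) \<Rightarrow> ('b set \<Rightarrow> 's \<Rightarrow> 'r) \<Rightarrow> bool" where
  "A_scheme_morphism X OX \<rho>X \<beta>X Y OY \<rho>Y \<beta>Y f \<phi> \<longleftrightarrow>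
     quasi_compact_map X Y f \<and> ringed_space_morphism X OX \<rho>X Y OY \<rho>Y f \<phi> \<and>
     (\<forall>V. qc_open Y V \<longrightarrow> (\<forall>I. fg_ideal (OY V) I \<longrightarrow>
        \<beta>X (f -` V \<inter> topspace X) (Idl\<^bsub>OX (f -` V \<inter> topspace X)\<^esub> (\<phi> V ` I))
          = f -` \<beta>Y V I \<inter> topspace X))"

end

theory Submission
  imports Defs "HOL-Algebra.QuotRing" "HOL-Algebra.Divisibility"
begin

lemma ring_hom_Units:
  assumes h: "h \<in> ring_hom R S" and u: "u \<in> Units R"
  shows "h u \<in> Units S"
proof -
  from u obtain v where v: "v \<in> carrier R" "v \<otimes>\<^bsub>R\<^esub> u = \<one>\<^bsub>R\<^esub>" "u \<otimes>\<^bsub>R\<^esub> v = \<one>\<^bsub>R\<^esub>"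
    and uc: "u \<in> carrier R" unfolding Units_def by auto
  have "h v \<otimes>\<^bsub>S\<^esub> h u = h (v \<otimes>\<^bsub>R\<^esub> u)" "h u \<otimes>\<^bsub>S\<^esub> h v = h (u \<otimes>\<^bsub>R\<^esub> v)"
    using ring_hom_mult[OF h v(1) uc] ring_hom_mult[OF h uc v(1)] by simp_all
  then have "h v \<otimes>\<^bsub>S\<^esub> h u = \<one>\<^bsub>S\<^esub>" "h u \<otimes>\<^bsub>S\<^esub> h v = \<one>\<^bsub>S\<^esub>"
    using v ring_hom_one[OF h] by simp_all
  moreover have "h v \<in> carrier S" "h u \<in> carrier S"
    using ring_hom_closed[OF h v(1)] ring_hom_closed[OF h uc] by auto
  ultimately show ?thesis unfolding Units_def by auto
qed

context cring
begin

lemma Idl_empty: "Idl {} = {\<zero>}"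
proof
  show "Idl {} \<subseteq> {\<zero>}" by (simp add: genideal_minimal zeroideal)
  have "ideal (Idl {}) R" by (rule genideal_ideal) simp
  then show "{\<zero>} \<subseteq> Idl {}"
    using additive_subgroup.zero_closed ideal.axioms(1) by blast
qed

lemma Idl_ideal_eq:
  assumes i: "ideal I R" shows "Idl I = I"
proof -
  have "I \<subseteq> carrier R" using ideal.Icarr[OF i] by blast
  then show ?thesis using genideal_minimal[OF i subset_refl] genideal_self[of I] by blast
qed

lemma set_add_mono_eq:
  assumes "ideal I R" "ideal J R" "I \<subseteq> J" shows "I <+> J = J"
  using union_genideal[OF assms(1,2)] Idl_ideal_eq[OF assms(2)] assms(3)
  by (simp add: sup.absorb2)

lemma Idl_union:
  assumes "G \<subseteq> carrier R" "H \<subseteq> carrier R"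
  shows "Idl G <+> Idl H = Idl (G \<union> H)"
proof -
  have iG: "ideal (Idl G) R" and iH: "ideal (Idl H) R" using assms genideal_ideal by auto
  have "Idl (Idl G \<union> Idl H) = Idl (G \<union> H)"
  proof
    have "Idl G \<subseteq> Idl (G \<union> H)" "Idl H \<subseteq> Idl (G \<union> H)"
      using assms subset_Idl_subset[of "G \<union> H" G] subset_Idl_subset[of "G \<union> H" H] by auto
    then show "Idl (Idl G \<union> Idl H) \<subseteq> Idl (G \<union> H)"
      using assms by (intro genideal_minimal genideal_ideal) auto
    have "G \<union> H \<subseteq> Idl G \<union> Idl H" using assms genideal_self by auto
    moreover have "Idl G \<union> Idl H \<subseteq> carrier R" using ideal.Icarr[OF iG] ideal.Icarr[OF iH] by auto
    ultimately show "Idl (G \<union> H) \<subseteq> Idl (Idl G \<union> Idl H)" by (intro subset_Idl_subset)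
  qed
  then show ?thesis using union_genideal[OF iG iH] by simp
qed

lemma Idl_insert:
  assumes "a \<in> carrier R" "H \<subseteq> carrier R"
  shows "Idl (insert a H) = PIdl a <+> Idl H"
  using Idl_union[of "{a}" H] assms cgenideal_eq_genideal by simp

lemma PIdl_zero: "PIdl \<zero> = {\<zero>}"
  using cgenideal_eq_genideal genideal_zero by simp

lemma ideal_unit_carrier:
  assumes "ideal I R" "u \<in> I" "u \<in> Units R" shows "I = carrier R"
proof -
  have "inv u \<otimes> u \<in> I" using ideal.I_l_closed[OF assms(1,2)] Units_inv_closed[OF assms(3)] by blast
  then have "\<one> \<in> I" using Units_l_inv[OF assms(3)] by simp
  then show ?thesis using assms(1) ideal.one_imp_carrier by blast
qed

lemma PIdl_unit: "u \<in> Units R \<Longrightarrow> PIdl u = carrier R"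
  using ideal_unit_carrier cgenideal_ideal cgenideal_self by blast

lemma fg_PIdl: "a \<in> carrier R \<Longrightarrow> fg_ideal R (PIdl a)"
  unfolding fg_ideal_def using cgenideal_ideal cgenideal_eq_genideal
  by (intro conjI exI[of _ "{a}"]) auto

lemma fg_set_add:
  assumes "fg_ideal R I" "fg_ideal R J" shows "fg_ideal R (I <+> J)"
proof -
  obtain G where G: "finite G" "G \<subseteq> carrier R" "I = Idl G" "ideal I R" using assms(1) unfolding fg_ideal_def by blast
  obtain H where H: "finite H" "H \<subseteq> carrier R" "J = Idl H" "ideal J R" using assms(2) unfolding fg_ideal_def by blast
  have "I <+> J = Idl (G \<union> H)" using Idl_union[OF G(2) H(2)] G H by simp
  moreover have "ideal (I <+> J) R" using add_ideals[OF G(4) H(4)] .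
  ultimately show ?thesis unfolding fg_ideal_def using G H by (intro conjI exI[of _ "G \<union> H"]) auto
qed

lemma fg_zero: "fg_ideal R {\<zero>}"
  unfolding fg_ideal_def using Idl_empty zeroideal by auto

lemma fg_carrier: "fg_ideal R (carrier R)"
  unfolding fg_ideal_def using genideal_one oneideal by (intro conjI exI[of _ "{\<one>}"]) auto

end

lemma Idl_image_hom:
  assumes R: "cring R" and S: "cring S" and h: "h \<in> ring_hom R S" and G: "G \<subseteq> carrier R"
  shows "Idl\<^bsub>S\<^esub> (h ` (Idl\<^bsub>R\<^esub> G)) = Idl\<^bsub>S\<^esub> (h ` G)"
proof -
  interpret R: cring R by fact
  interpret S: cring S by fact
  interpret hr: ring_hom_ring R S h using ring_hom_ringI2 R.ring_axioms S.ring_axioms h .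
  have hG: "h ` G \<subseteq> carrier S" using ring_hom_closed[OF h] G by auto
  have iIG: "ideal (Idl\<^bsub>R\<^esub> G) R" using G R.genideal_ideal by blast
  have hIG: "h ` (Idl\<^bsub>R\<^esub> G) \<subseteq> carrier S" using ideal.Icarr[OF iIG] ring_hom_closed[OF h] by auto
  show ?thesis
  proof
    have K: "ideal {r \<in> carrier R. h r \<in> Idl\<^bsub>S\<^esub> (h ` G)} R"
      using hr.ideal_vimage S.genideal_ideal[OF hG] by blast
    have "G \<subseteq> {r \<in> carrier R. h r \<in> Idl\<^bsub>S\<^esub> (h ` G)}"
      using G S.genideal_self[OF hG] by auto
    then have "Idl\<^bsub>R\<^esub> G \<subseteq> {r \<in> carrier R. h r \<in> Idl\<^bsub>S\<^esub> (h ` G)}"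
      using R.genideal_minimal[OF K] by blast
    then have "h ` (Idl\<^bsub>R\<^esub> G) \<subseteq> Idl\<^bsub>S\<^esub> (h ` G)" by blast
    then show "Idl\<^bsub>S\<^esub> (h ` (Idl\<^bsub>R\<^esub> G)) \<subseteq> Idl\<^bsub>S\<^esub> (h ` G)"
      using S.genideal_minimal S.genideal_ideal[OF hG] by blast
    have "h ` G \<subseteq> h ` (Idl\<^bsub>R\<^esub> G)" using R.genideal_self[OF G] by blast
    then show "Idl\<^bsub>S\<^esub> (h ` G) \<subseteq> Idl\<^bsub>S\<^esub> (h ` (Idl\<^bsub>R\<^esub> G))"
      using S.subset_Idl_subset[OF hIG] by blast
  qed
qed

lemma PIdl_image_hom:
  assumes R: "cring R" and S: "cring S" and h: "h \<in> ring_hom R S" and a: "a \<in> carrier R"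
  shows "Idl\<^bsub>S\<^esub> (h ` (PIdl\<^bsub>R\<^esub> a)) = PIdl\<^bsub>S\<^esub> (h a)"
  using Idl_image_hom[OF R S h, of "{a}"] a cring.cgenideal_eq_genideal[OF R a]
    cring.cgenideal_eq_genideal[OF S ring_hom_closed[OF h a]] by simp

lemma local_ring_crit:
  fixes R :: "('a, 'b) ring_scheme" (structure)
  assumes R: "cring R" and nz: "\<one>\<^bsub>R\<^esub> \<noteq> \<zero>\<^bsub>R\<^esub>"
    and add: "\<And>a b. a \<in> carrier R - Units R \<Longrightarrow> b \<in> carrier R - Units R \<Longrightarrow> a \<oplus>\<^bsub>R\<^esub> b \<notin> Units R"
  shows "local_ring R \<and> max_ideal R = carrier R - Units R"
proof -
  interpret cring R by fact
  define N where "N = carrier R - Units R"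
  have zN: "\<zero> \<in> N"
  proof -
    have "\<zero> \<notin> Units R"
    proof
      assume z: "\<zero> \<in> Units R"
      have "inv \<zero> \<otimes> \<zero> = \<one>" using Units_l_inv[OF z] .
      then have "\<one> = \<zero>" using Units_inv_closed[OF z] by simp
      then show False using nz by simp
    qed
    then show ?thesis by (simp add: N_def)
  qed
  have mulN: "x \<otimes> a \<in> N" if "a \<in> N" "x \<in> carrier R" for a x
  proof -
    have "x \<otimes> a \<notin> Units R"
    proof
      assume xa: "x \<otimes> a \<in> Units R"
      have ac: "a \<in> carrier R" using that by (simp add: N_def)
      have "a \<otimes> x = x \<otimes> a" using m_comm[OF ac that(2)] .
      then have ax: "a \<otimes> x \<in> Units R" using xa by simp
      have "a \<in> Units R" using unit_factor[OF ax ac that(2)] .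
      then show False using that by (simp add: N_def)
    qed
    then show ?thesis using that by (simp add: N_def)
  qed
  have negN: "\<ominus> a \<in> N" if "a \<in> N" for a
  proof -
    have "\<ominus> a = (\<ominus> \<one>) \<otimes> a" using that by (simp add: N_def l_minus)
    then show ?thesis using mulN that by simp
  qed
  have idN: "ideal N R"
  proof (rule idealI)
    show "ring R" by (rule ring_axioms)
    show "subgroup N (add_monoid R)"
    proof
      show "N \<subseteq> carrier (add_monoid R)" by (auto simp: N_def)
      show "x \<otimes>\<^bsub>add_monoid R\<^esub> y \<in> N" if "x \<in> N" "y \<in> N" for x y
        using add[of x y] that by (auto simp: N_def)
      show "\<one>\<^bsub>add_monoid R\<^esub> \<in> N" using zN by simp
      show "inv\<^bsub>add_monoid R\<^esub> x \<in> N" if "x \<in> N" for x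
        using negN[OF that] by (simp add: a_inv_def)
    qed
    show "x \<otimes> a \<in> N" if "a \<in> N" "x \<in> carrier R" for a x using mulN that .
    show "a \<otimes> x \<in> N" if "a \<in> N" "x \<in> carrier R" for a x
      using mulN that by (simp add: N_def m_comm)
  qed
  have oneN: "\<one> \<notin> N" by (simp add: N_def)
  have maxN: "maximalideal N R"
  proof (rule maximalidealI[OF idN])
    show "carrier R \<noteq> N" using oneN by auto
    fix J assume J: "ideal J R" "N \<subseteq> J" "J \<subseteq> carrier R"
    show "J = N \<or> J = carrier R"
    proof (cases "J \<subseteq> N")
      case True then show ?thesis using J by auto
    next
      case False
      then obtain u where "u \<in> J" "u \<notin> N" by auto
      then have "u \<in> Units R" using J by (auto simp: N_def)
      then show ?thesis using ideal_unit_carrier[OF J(1) \<open>u \<in> J\<close>] by auto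
    qed
  qed
  have uniq: "M = N" if "maximalideal M R" for M
  proof -
    interpret M: maximalideal M R by fact
    have "M \<subseteq> N"
    proof
      fix m assume "m \<in> M"
      have "m \<notin> Units R"
      proof
        assume "m \<in> Units R"
        then have "M = carrier R" using ideal_unit_carrier[OF M.is_ideal \<open>m \<in> M\<close>] by simp
        then show False using M.I_notcarr by simp
      qed
      then show "m \<in> N" using \<open>m \<in> M\<close> M.Icarr by (simp add: N_def)
    qed
    then have "N = M \<or> N = carrier R" using M.I_maximal[OF idN] by (auto simp: N_def)
    then show ?thesis using oneN by auto
  qed
  have "\<exists>!M. maximalideal M R" using ex1I[of "\<lambda>M. maximalideal M R" N, OF maxN uniq] .
  moreover have "max_ideal R = N" unfolding max_ideal_def
    using the_equality[of "\<lambda>M. maximalideal M R" N, OF maxN uniq] .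
  ultimately show ?thesis by (simp add: local_ring_def N_def R)
qed

lemma local_hom_iff:
  assumes "max_ideal A = carrier A - Units A" "max_ideal B = carrier B - Units B"
    and h: "h \<in> ring_hom A B"
  shows "local_ring_hom A B h \<longleftrightarrow> (\<forall>a\<in>carrier A. h a \<in> Units B \<longrightarrow> a \<in> Units A)"
  using assms ring_hom_closed[OF h] unfolding local_ring_hom_def by auto


locale psh =
  fixes X :: "'a topology" and S :: "'a set \<Rightarrow> 'r ring" and \<rho> :: "'a set \<Rightarrow> 'a set \<Rightarrow> 'r \<Rightarrow> 'r"
  assumes psh: "presheaf_of_crings X S \<rho>"
begin

abbreviation "St x \<equiv> stalk X S \<rho> x"
abbreviation "gm x \<equiv> germ X S \<rho> x"
abbreviation "gr x \<equiv> germ_rel X S \<rho> x"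
abbreviation "GP x \<equiv> germ_pairs X S x"

lemma cr: "openin X U \<Longrightarrow> cring (S U)"
  using conjunct1[OF psh[unfolded presheaf_of_crings_def]] by blast

lemma hom: "openin X U \<Longrightarrow> openin X V \<Longrightarrow> V \<subseteq> U \<Longrightarrow> \<rho> U V \<in> ring_hom (S U) (S V)"
  using conjunct1[OF conjunct2[OF psh[unfolded presheaf_of_crings_def]]] by blast

lemma rid: "openin X U \<Longrightarrow> s \<in> carrier (S U) \<Longrightarrow> \<rho> U U s = s"
  using conjunct1[OF conjunct2[OF conjunct2[OF psh[unfolded presheaf_of_crings_def]]]] by blast

lemma rcomp: "openin X U \<Longrightarrow> openin X V \<Longrightarrow> openin X W \<Longrightarrow> W \<subseteq> V \<Longrightarrow> V \<subseteq> U \<Longrightarrow>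
   s \<in> carrier (S U) \<Longrightarrow> \<rho> V W (\<rho> U V s) = \<rho> U W s"
  using conjunct2[OF conjunct2[OF conjunct2[OF psh[unfolded presheaf_of_crings_def]]]] by blast

lemma rcar: "openin X U \<Longrightarrow> openin X V \<Longrightarrow> V \<subseteq> U \<Longrightarrow> s \<in> carrier (S U) \<Longrightarrow> \<rho> U V s \<in> carrier (S V)"
  by (rule ring_hom_closed[OF hom])

lemma rmult: "openin X U \<Longrightarrow> openin X V \<Longrightarrow> V \<subseteq> U \<Longrightarrow> a \<in> carrier (S U) \<Longrightarrow> b \<in> carrier (S U) \<Longrightarrow>
   \<rho> U V (a \<otimes>\<^bsub>S U\<^esub> b) = \<rho> U V a \<otimes>\<^bsub>S V\<^esub> \<rho> U V b"
  by (rule ring_hom_mult[OF hom])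

lemma radd: "openin X U \<Longrightarrow> openin X V \<Longrightarrow> V \<subseteq> U \<Longrightarrow> a \<in> carrier (S U) \<Longrightarrow> b \<in> carrier (S U) \<Longrightarrow>
   \<rho> U V (a \<oplus>\<^bsub>S U\<^esub> b) = \<rho> U V a \<oplus>\<^bsub>S V\<^esub> \<rho> U V b"
  by (rule ring_hom_add[OF hom])

lemma rone: "openin X U \<Longrightarrow> openin X V \<Longrightarrow> V \<subseteq> U \<Longrightarrow> \<rho> U V \<one>\<^bsub>S U\<^esub> = \<one>\<^bsub>S V\<^esub>"
  by (rule ring_hom_one[OF hom])

lemma rzero: "openin X U \<Longrightarrow> openin X V \<Longrightarrow> V \<subseteq> U \<Longrightarrow> \<rho> U V \<zero>\<^bsub>S U\<^esub> = \<zero>\<^bsub>S V\<^esub>"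
  using ring_hom_zero[OF hom[of U V] cring.axioms(1)[OF cr[of U]] cring.axioms(1)[OF cr[of V]]] by blast

lemma agree_mono:
  assumes "openin X U" "openin X V" "openin X W" "openin X W'" "W \<subseteq> U" "W \<subseteq> V" "W' \<subseteq> W"
    "s \<in> carrier (S U)" "t \<in> carrier (S V)" "\<rho> U W s = \<rho> V W t"
  shows "\<rho> U W' s = \<rho> V W' t"
proof -
  have "\<rho> U W' s = \<rho> W W' (\<rho> U W s)" using rcomp[of U W W' s] assms by auto
  also have "\<dots> = \<rho> W W' (\<rho> V W t)" using assms(10) by simp
  also have "\<dots> = \<rho> V W' t" using rcomp[of V W W' t] assms by auto
  finally show ?thesis .
qed

lemma gp_iff: "(U, s) \<in> GP x \<longleftrightarrow> openin X U \<and> x \<in> U \<and> s \<in> carrier (S U)"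
  by (simp add: germ_pairs_def)

lemma gr_iff: "((U, s), (V, t)) \<in> gr x \<longleftrightarrow> (U, s) \<in> GP x \<and> (V, t) \<in> GP x \<and>
   (\<exists>W. openin X W \<and> x \<in> W \<and> W \<subseteq> U \<inter> V \<and> \<rho> U W s = \<rho> V W t)"
  by (simp add: germ_rel_def)

lemma equiv_gr: "equiv (GP x) (gr x)"
proof (rule equivI)
  show "gr x \<subseteq> GP x \<times> GP x" by (auto simp: germ_rel_def)
  show "refl_on (GP x) (gr x)"
  proof (rule refl_onI)
    fix p assume "p \<in> GP x"
    then obtain U s where p: "p = (U, s)" "openin X U" "x \<in> U" "s \<in> carrier (S U)"
      by (cases p) (auto simp: gp_iff)
    then show "(p, p) \<in> gr x" by (auto simp: gr_iff gp_iff intro!: exI[of _ U])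
  qed
  show "sym (gr x)" by (rule symI) (auto simp: germ_rel_def)
  show "trans (gr x)"
  proof (rule transI)
    fix p q r assume pq: "(p, q) \<in> gr x" and qr: "(q, r) \<in> gr x"
    obtain U s V t Z w where pqr: "p = (U, s)" "q = (V, t)" "r = (Z, w)"
      by (cases p, cases q, cases r) auto
    from pq obtain W1 where W1: "openin X W1" "x \<in> W1" "W1 \<subseteq> U \<inter> V" "\<rho> U W1 s = \<rho> V W1 t"
      and g1: "(U, s) \<in> GP x" "(V, t) \<in> GP x" by (auto simp: pqr gr_iff)
    from qr obtain W2 where W2: "openin X W2" "x \<in> W2" "W2 \<subseteq> V \<inter> Z" "\<rho> V W2 t = \<rho> Z W2 w"
      and g2: "(Z, w) \<in> GP x" by (auto simp: pqr gr_iff)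
    have o: "openin X U" "openin X V" "openin X Z" "s \<in> carrier (S U)" "t \<in> carrier (S V)"
      "w \<in> carrier (S Z)" using g1 g2 by (auto simp: gp_iff)
    have "\<rho> U (W1 \<inter> W2) s = \<rho> V (W1 \<inter> W2) t"
      by (rule agree_mono[of U V W1]) (use o W1 W2 in auto)
    moreover have "\<rho> V (W1 \<inter> W2) t = \<rho> Z (W1 \<inter> W2) w"
      by (rule agree_mono[of V Z W2]) (use o W1 W2 in auto)
    ultimately show "(p, r) \<in> gr x" using W1 W2 g1 g2
      by (auto simp: pqr gr_iff intro!: exI[of _ "W1 \<inter> W2"])
  qed
qed

lemma gm_eq_iff: "(U, s) \<in> GP x \<Longrightarrow> (V, t) \<in> GP x \<Longrightarrow> gm x U s = gm x V t \<longleftrightarrow> ((U, s), (V, t)) \<in> gr x"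
  unfolding germ_def using eq_equiv_class_iff[OF equiv_gr] by blast

lemma gm_eqI:
  assumes "(U, s) \<in> GP x" "(V, t) \<in> GP x" "openin X W" "x \<in> W" "W \<subseteq> U \<inter> V" "\<rho> U W s = \<rho> V W t"
  shows "gm x U s = gm x V t"
  using gm_eq_iff[OF assms(1,2)] gr_iff assms by blast

lemma gp_restr: "(U, s) \<in> GP x \<Longrightarrow> openin X W \<Longrightarrow> x \<in> W \<Longrightarrow> W \<subseteq> U \<Longrightarrow> (W, \<rho> U W s) \<in> GP x"
  by (auto simp: gp_iff intro: rcar)

lemma gm_restr:
  assumes "(U, s) \<in> GP x" "openin X W" "x \<in> W" "W \<subseteq> U"
  shows "gm x W (\<rho> U W s) = gm x U s"
proof (rule gm_eqI[of _ _ _ _ _ W])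
  show "(W, \<rho> U W s) \<in> GP x" using gp_restr assms .
  show "\<rho> W W (\<rho> U W s) = \<rho> U W s"
  proof -
    have "openin X U" "s \<in> carrier (S U)" using assms(1) by (auto simp: gp_iff)
    then show ?thesis using rid[OF assms(2) rcar[OF _ assms(2) assms(4)]] by simp
  qed
qed (use assms in auto)

lemma carrier_St: "carrier (St x) = GP x // gr x" by (simp add: stalk_def)

lemma gm_in: "(U, s) \<in> GP x \<Longrightarrow> gm x U s \<in> carrier (St x)"
  by (simp add: carrier_St germ_def quotientI)

lemma St_cases:
  assumes "A \<in> carrier (St x)"
  obtains U s where "openin X U" "x \<in> U" "s \<in> carrier (S U)" "A = gm x U s"
  using assms by (auto simp: carrier_St germ_def gp_iff elim!: quotientE)

lemma some_rep:
  assumes "(U, s) \<in> GP x"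
  obtains U' s' where "(SOME p. p \<in> gm x U s) = (U', s')" "(U', s') \<in> GP x" "gm x U' s' = gm x U s"
proof -
  have "(U, s) \<in> gm x U s" unfolding germ_def using equiv_class_self[OF equiv_gr assms] .
  then have "(SOME p. p \<in> gm x U s) \<in> gm x U s" by (rule someI)
  moreover obtain U' s' where "(SOME p. p \<in> gm x U s) = (U', s')" by fastforce
  ultimately have "((U, s), (U', s')) \<in> gr x" by (simp add: germ_def)
  then have "(U', s') \<in> GP x" "gm x U' s' = gm x U s"
    using gm_eq_iff assms by (auto simp: gr_iff)
  then show ?thesis using that \<open>(SOME p. p \<in> gm x U s) = (U', s')\<close> by blast
qed

lemma binop_germ:
  fixes op :: "'r ring \<Rightarrow> 'r \<Rightarrow> 'r \<Rightarrow> 'r"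
  assumes opc: "\<And>U a b. openin X U \<Longrightarrow> a \<in> carrier (S U) \<Longrightarrow> b \<in> carrier (S U) \<Longrightarrow> op (S U) a b \<in> carrier (S U)"
    and oph: "\<And>U V a b. openin X U \<Longrightarrow> openin X V \<Longrightarrow> V \<subseteq> U \<Longrightarrow> a \<in> carrier (S U) \<Longrightarrow> b \<in> carrier (S U) \<Longrightarrow>
       \<rho> U V (op (S U) a b) = op (S V) (\<rho> U V a) (\<rho> U V b)"
    and A: "(U, s) \<in> GP x" and B: "(V, t) \<in> GP x"
  shows "(case (SOME p. p \<in> gm x U s, SOME q. q \<in> gm x V t) of ((U, s), (V, t)) \<Rightarrow>
            gm x (U \<inter> V) (op (S (U \<inter> V)) (\<rho> U (U \<inter> V) s) (\<rho> V (U \<inter> V) t)))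
       = gm x (U \<inter> V) (op (S (U \<inter> V)) (\<rho> U (U \<inter> V) s) (\<rho> V (U \<inter> V) t))"
proof -
  obtain U' s' where 1: "(SOME p. p \<in> gm x U s) = (U', s')" "(U', s') \<in> GP x" "gm x U' s' = gm x U s"
    by (rule some_rep[OF A])
  obtain V' t' where 2: "(SOME p. p \<in> gm x V t) = (V', t')" "(V', t') \<in> GP x" "gm x V' t' = gm x V t"
    by (rule some_rep[OF B])
  from 1 A obtain W1 where W1: "openin X W1" "x \<in> W1" "W1 \<subseteq> U' \<inter> U" "\<rho> U' W1 s' = \<rho> U W1 s"
    using gm_eq_iff[OF 1(2) A] gr_iff[of U' s' U s x] by blast
  from 2 B obtain W2 where W2: "openin X W2" "x \<in> W2" "W2 \<subseteq> V' \<inter> V" "\<rho> V' W2 t' = \<rho> V W2 t"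
    using gm_eq_iff[OF 2(2) B] gr_iff[of V' t' V t x] by blast
  have o: "openin X U" "openin X V" "openin X U'" "openin X V'" "s \<in> carrier (S U)" "t \<in> carrier (S V)"
    "s' \<in> carrier (S U')" "t' \<in> carrier (S V')" "x \<in> U" "x \<in> V" "x \<in> U'" "x \<in> V'"
    using A B 1 2 by (auto simp: gp_iff)
  define W where "W = W1 \<inter> W2"
  have oW: "openin X W" "x \<in> W" using W1 W2 by (auto simp: W_def)
  have e1: "\<rho> U' W s' = \<rho> U W s"
    by (rule agree_mono[of U' U W1]) (use o W1 W2 in \<open>auto simp: W_def\<close>)
  have e2: "\<rho> V' W t' = \<rho> V W t"
    by (rule agree_mono[of V' V W2]) (use o W1 W2 in \<open>auto simp: W_def\<close>)
  have key: "\<rho> (P \<inter> Q) W (op (S (P \<inter> Q)) (\<rho> P (P \<inter> Q) a) (\<rho> Q (P \<inter> Q) b)) = op (S W) (\<rho> P W a) (\<rho> Q W b)"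
    if "openin X P" "openin X Q" "W \<subseteq> P \<inter> Q" "a \<in> carrier (S P)" "b \<in> carrier (S Q)" for P Q a b
  proof -
    have oPQ: "openin X (P \<inter> Q)" using that by auto
    have "\<rho> (P \<inter> Q) W (op (S (P \<inter> Q)) (\<rho> P (P \<inter> Q) a) (\<rho> Q (P \<inter> Q) b))
        = op (S W) (\<rho> (P \<inter> Q) W (\<rho> P (P \<inter> Q) a)) (\<rho> (P \<inter> Q) W (\<rho> Q (P \<inter> Q) b))"
      using that oPQ oW by (intro oph) (auto intro: rcar)
    also have "\<dots> = op (S W) (\<rho> P W a) (\<rho> Q W b)"
      using that oPQ oW rcomp[of P "P \<inter> Q" W a] rcomp[of Q "P \<inter> Q" W b] by auto
    finally show ?thesis .
  qed
  have g1: "(U' \<inter> V', op (S (U' \<inter> V')) (\<rho> U' (U' \<inter> V') s') (\<rho> V' (U' \<inter> V') t')) \<in> GP x"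
    using o by (auto simp: gp_iff intro!: opc rcar openin_Int)
  have g2: "(U \<inter> V, op (S (U \<inter> V)) (\<rho> U (U \<inter> V) s) (\<rho> V (U \<inter> V) t)) \<in> GP x"
    using o by (auto simp: gp_iff intro!: opc rcar openin_Int)
  have "gm x (U' \<inter> V') (op (S (U' \<inter> V')) (\<rho> U' (U' \<inter> V') s') (\<rho> V' (U' \<inter> V') t'))
      = gm x (U \<inter> V) (op (S (U \<inter> V)) (\<rho> U (U \<inter> V) s) (\<rho> V (U \<inter> V) t))"
  proof (rule gm_eqI[OF g1 g2 oW])
    show "W \<subseteq> U' \<inter> V' \<inter> (U \<inter> V)" using W1 W2 by (auto simp: W_def)
    show "\<rho> (U' \<inter> V') W (op (S (U' \<inter> V')) (\<rho> U' (U' \<inter> V') s') (\<rho> V' (U' \<inter> V') t')) =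
      \<rho> (U \<inter> V) W (op (S (U \<inter> V)) (\<rho> U (U \<inter> V) s) (\<rho> V (U \<inter> V) t))"
    proof -
      have s1: "W \<subseteq> U' \<inter> V'" "W \<subseteq> U \<inter> V" using W1 W2 by (auto simp: W_def)
      show ?thesis using key[OF o(3) o(4) s1(1) o(7) o(8)] key[OF o(1) o(2) s1(2) o(5) o(6)] e1 e2 by simp
    qed
  qed
  then show ?thesis using 1 2 by simp
qed

lemma mult_gm:
  assumes "(U, s) \<in> GP x" "(V, t) \<in> GP x"
  shows "gm x U s \<otimes>\<^bsub>St x\<^esub> gm x V t = gm x (U \<inter> V) (\<rho> U (U \<inter> V) s \<otimes>\<^bsub>S (U \<inter> V)\<^esub> \<rho> V (U \<inter> V) t)"
proof -
  have "(case (SOME p. p \<in> gm x U s, SOME q. q \<in> gm x V t) of ((U, s), (V, t)) \<Rightarrow>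
            gm x (U \<inter> V) ((\<lambda>R a b. a \<otimes>\<^bsub>R\<^esub> b) (S (U \<inter> V)) (\<rho> U (U \<inter> V) s) (\<rho> V (U \<inter> V) t)))
       = gm x (U \<inter> V) ((\<lambda>R a b. a \<otimes>\<^bsub>R\<^esub> b) (S (U \<inter> V)) (\<rho> U (U \<inter> V) s) (\<rho> V (U \<inter> V) t))"
    by (rule binop_germ[OF _ _ assms]) (auto intro: rmult cring.cring_simprules cr)
  then show ?thesis by (simp add: stalk_def)
qed

lemma add_gm:
  assumes "(U, s) \<in> GP x" "(V, t) \<in> GP x"
  shows "gm x U s \<oplus>\<^bsub>St x\<^esub> gm x V t = gm x (U \<inter> V) (\<rho> U (U \<inter> V) s \<oplus>\<^bsub>S (U \<inter> V)\<^esub> \<rho> V (U \<inter> V) t)"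
proof -
  have "(case (SOME p. p \<in> gm x U s, SOME q. q \<in> gm x V t) of ((U, s), (V, t)) \<Rightarrow>
            gm x (U \<inter> V) ((\<lambda>R a b. a \<oplus>\<^bsub>R\<^esub> b) (S (U \<inter> V)) (\<rho> U (U \<inter> V) s) (\<rho> V (U \<inter> V) t)))
       = gm x (U \<inter> V) ((\<lambda>R a b. a \<oplus>\<^bsub>R\<^esub> b) (S (U \<inter> V)) (\<rho> U (U \<inter> V) s) (\<rho> V (U \<inter> V) t))"
    by (rule binop_germ[OF _ _ assms]) (auto intro: radd cring.cring_simprules cr)
  then show ?thesis by (simp add: stalk_def)
qed

lemma mult_same:
  assumes "openin X T" "x \<in> T" "a \<in> carrier (S T)" "b \<in> carrier (S T)"
  shows "gm x T a \<otimes>\<^bsub>St x\<^esub> gm x T b = gm x T (a \<otimes>\<^bsub>S T\<^esub> b)"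
  using mult_gm[of T a x T b] assms by (simp add: gp_iff rid)

lemma add_same:
  assumes "openin X T" "x \<in> T" "a \<in> carrier (S T)" "b \<in> carrier (S T)"
  shows "gm x T a \<oplus>\<^bsub>St x\<^esub> gm x T b = gm x T (a \<oplus>\<^bsub>S T\<^esub> b)"
  using add_gm[of T a x T b] assms by (simp add: gp_iff rid)

lemma one_St:
  assumes "openin X T" "x \<in> T"
  shows "\<one>\<^bsub>St x\<^esub> = gm x T \<one>\<^bsub>S T\<^esub>"
proof -
  have x: "x \<in> topspace X" using assms openin_subset by blast
  have g: "(topspace X, \<one>\<^bsub>S (topspace X)\<^esub>) \<in> GP x"
    using x cr[of "topspace X"] by (simp add: gp_iff cring.cring_simprules)
  have "gm x T (\<rho> (topspace X) T \<one>\<^bsub>S (topspace X)\<^esub>) = gm x (topspace X) \<one>\<^bsub>S (topspace X)\<^esub>"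
    using gm_restr[OF g assms] openin_subset[OF assms(1)] by simp
  then show ?thesis using rone[of "topspace X" T] assms openin_subset[OF assms(1)]
    by (simp add: stalk_def)
qed

lemma zero_St:
  assumes "openin X T" "x \<in> T"
  shows "\<zero>\<^bsub>St x\<^esub> = gm x T \<zero>\<^bsub>S T\<^esub>"
proof -
  have x: "x \<in> topspace X" using assms openin_subset by blast
  have g: "(topspace X, \<zero>\<^bsub>S (topspace X)\<^esub>) \<in> GP x"
    using x cr[of "topspace X"] by (simp add: gp_iff cring.cring_simprules)
  have "gm x T (\<rho> (topspace X) T \<zero>\<^bsub>S (topspace X)\<^esub>) = gm x (topspace X) \<zero>\<^bsub>S (topspace X)\<^esub>"
    using gm_restr[OF g assms] openin_subset[OF assms(1)] by simp
  then show ?thesis using rzero[of "topspace X" T] assms openin_subset[OF assms(1)]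
    by (simp add: stalk_def)
qed

lemma rep_shrink:
  assumes "A \<in> carrier (St x)"
  obtains U s where "openin X U" "x \<in> U" "s \<in> carrier (S U)" "A = gm x U s"
    "\<And>W. openin X W \<Longrightarrow> x \<in> W \<Longrightarrow> W \<subseteq> U \<Longrightarrow> A = gm x W (\<rho> U W s) \<and> \<rho> U W s \<in> carrier (S W)"
proof -
  obtain U s where u: "openin X U" "x \<in> U" "s \<in> carrier (S U)" "A = gm x U s"
    by (rule St_cases[OF assms])
  have "A = gm x W (\<rho> U W s) \<and> \<rho> U W s \<in> carrier (S W)" if "openin X W" "x \<in> W" "W \<subseteq> U" for W
    using gm_restr[of U s x W] rcar[of U W s] u that by (auto simp: gp_iff)
  then show ?thesis using that u by blast
qed

lemma common2:
  assumes "A \<in> carrier (St x)" "B \<in> carrier (St x)"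
  obtains T a b where "openin X T" "x \<in> T" "a \<in> carrier (S T)" "b \<in> carrier (S T)"
    "A = gm x T a" "B = gm x T b"
proof -
  obtain U s where u: "openin X U" "x \<in> U" "s \<in> carrier (S U)" "A = gm x U s"
    "\<And>W. openin X W \<Longrightarrow> x \<in> W \<Longrightarrow> W \<subseteq> U \<Longrightarrow> A = gm x W (\<rho> U W s) \<and> \<rho> U W s \<in> carrier (S W)"
    by (rule rep_shrink[OF assms(1)]) blast
  obtain V t where v: "openin X V" "x \<in> V" "t \<in> carrier (S V)" "B = gm x V t"
    "\<And>W. openin X W \<Longrightarrow> x \<in> W \<Longrightarrow> W \<subseteq> V \<Longrightarrow> B = gm x W (\<rho> V W t) \<and> \<rho> V W t \<in> carrier (S W)"
    by (rule rep_shrink[OF assms(2)]) blast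
  have o: "openin X (U \<inter> V)" "x \<in> U \<inter> V" using u v by auto
  have a: "A = gm x (U \<inter> V) (\<rho> U (U \<inter> V) s) \<and> \<rho> U (U \<inter> V) s \<in> carrier (S (U \<inter> V))"
    by (rule u(5)[OF o]) blast
  have b: "B = gm x (U \<inter> V) (\<rho> V (U \<inter> V) t) \<and> \<rho> V (U \<inter> V) t \<in> carrier (S (U \<inter> V))"
    by (rule v(5)[OF o]) blast
  show ?thesis using that[OF o(1) o(2) conjunct2[OF a] conjunct2[OF b] conjunct1[OF a] conjunct1[OF b]] .
qed

lemma common3:
  assumes "A \<in> carrier (St x)" "B \<in> carrier (St x)" "C \<in> carrier (St x)"
  obtains T a b c where "openin X T" "x \<in> T" "a \<in> carrier (S T)" "b \<in> carrier (S T)" "c \<in> carrier (S T)"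
    "A = gm x T a" "B = gm x T b" "C = gm x T c"
proof -
  obtain U s where u: "openin X U" "x \<in> U" "s \<in> carrier (S U)" "A = gm x U s"
    "\<And>W. openin X W \<Longrightarrow> x \<in> W \<Longrightarrow> W \<subseteq> U \<Longrightarrow> A = gm x W (\<rho> U W s) \<and> \<rho> U W s \<in> carrier (S W)"
    by (rule rep_shrink[OF assms(1)]) blast
  obtain V t where v: "openin X V" "x \<in> V" "t \<in> carrier (S V)" "B = gm x V t"
    "\<And>W. openin X W \<Longrightarrow> x \<in> W \<Longrightarrow> W \<subseteq> V \<Longrightarrow> B = gm x W (\<rho> V W t) \<and> \<rho> V W t \<in> carrier (S W)"
    by (rule rep_shrink[OF assms(2)]) blast
  obtain Z r where z: "openin X Z" "x \<in> Z" "r \<in> carrier (S Z)" "C = gm x Z r"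
    "\<And>W. openin X W \<Longrightarrow> x \<in> W \<Longrightarrow> W \<subseteq> Z \<Longrightarrow> C = gm x W (\<rho> Z W r) \<and> \<rho> Z W r \<in> carrier (S W)"
    by (rule rep_shrink[OF assms(3)]) blast
  let ?T = "U \<inter> V \<inter> Z"
  have o: "openin X ?T" "x \<in> ?T" using u v z by auto
  have a: "A = gm x ?T (\<rho> U ?T s) \<and> \<rho> U ?T s \<in> carrier (S ?T)"
    by (rule u(5)[OF o]) blast
  have b: "B = gm x ?T (\<rho> V ?T t) \<and> \<rho> V ?T t \<in> carrier (S ?T)"
    by (rule v(5)[OF o]) blast
  have c: "C = gm x ?T (\<rho> Z ?T r) \<and> \<rho> Z ?T r \<in> carrier (S ?T)"
    by (rule z(5)[OF o]) blast
  show ?thesis using that[OF o(1) o(2) conjunct2[OF a] conjunct2[OF b] conjunct2[OF c]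
     conjunct1[OF a] conjunct1[OF b] conjunct1[OF c]] .
qed

lemma cring_St:
  assumes x: "x \<in> topspace X"
  shows "cring (St x)"
proof -
  have oT: "openin X (topspace X)" by simp
  show ?thesis
  proof (rule cringI)
    show "abelian_group (St x)"
    proof (rule abelian_groupI)
      fix A B assume "A \<in> carrier (St x)" "B \<in> carrier (St x)"
      then obtain T a b where t: "openin X T" "x \<in> T" "a \<in> carrier (S T)" "b \<in> carrier (S T)"
        "A = gm x T a" "B = gm x T b" by (rule common2)
      interpret cring "S T" using cr t by blast
      show "A \<oplus>\<^bsub>St x\<^esub> B \<in> carrier (St x)" using t add_same gm_in by (simp add: gp_iff)
      show "A \<oplus>\<^bsub>St x\<^esub> B = B \<oplus>\<^bsub>St x\<^esub> A" using t add_same by (simp add: a_comm)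
    next
      show "\<zero>\<^bsub>St x\<^esub> \<in> carrier (St x)"
        using zero_St[OF oT x] gm_in x cr[OF oT] by (simp add: gp_iff cring.cring_simprules)
    next
      fix A B C assume "A \<in> carrier (St x)" "B \<in> carrier (St x)" "C \<in> carrier (St x)"
      then obtain T a b c where t: "openin X T" "x \<in> T" "a \<in> carrier (S T)" "b \<in> carrier (S T)"
        "c \<in> carrier (S T)" "A = gm x T a" "B = gm x T b" "C = gm x T c" by (rule common3)
      interpret cring "S T" using cr t by blast
      show "A \<oplus>\<^bsub>St x\<^esub> B \<oplus>\<^bsub>St x\<^esub> C = A \<oplus>\<^bsub>St x\<^esub> (B \<oplus>\<^bsub>St x\<^esub> C)"
        using t add_same by (simp add: a_assoc)
    next
      fix A assume "A \<in> carrier (St x)"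
      then obtain T a where t: "openin X T" "x \<in> T" "a \<in> carrier (S T)" "A = gm x T a"
        by (rule St_cases)
      interpret cring "S T" using cr t by blast
      show "\<zero>\<^bsub>St x\<^esub> \<oplus>\<^bsub>St x\<^esub> A = A" using t add_same zero_St by simp
      have "gm x T (\<ominus>\<^bsub>S T\<^esub> a) \<oplus>\<^bsub>St x\<^esub> A = \<zero>\<^bsub>St x\<^esub>" using t add_same zero_St by (simp add: l_neg)
      moreover have "gm x T (\<ominus>\<^bsub>S T\<^esub> a) \<in> carrier (St x)" using t gm_in by (simp add: gp_iff)
      ultimately show "\<exists>y\<in>carrier (St x). y \<oplus>\<^bsub>St x\<^esub> A = \<zero>\<^bsub>St x\<^esub>" by blast
    qed
  next
    show "comm_monoid (St x)"
    proof (rule comm_monoidI)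
      fix A B assume "A \<in> carrier (St x)" "B \<in> carrier (St x)"
      then obtain T a b where t: "openin X T" "x \<in> T" "a \<in> carrier (S T)" "b \<in> carrier (S T)"
        "A = gm x T a" "B = gm x T b" by (rule common2)
      interpret cring "S T" using cr t by blast
      show "A \<otimes>\<^bsub>St x\<^esub> B \<in> carrier (St x)" using t mult_same gm_in by (simp add: gp_iff)
      show "A \<otimes>\<^bsub>St x\<^esub> B = B \<otimes>\<^bsub>St x\<^esub> A" using t mult_same by (simp add: m_comm)
    next
      show "\<one>\<^bsub>St x\<^esub> \<in> carrier (St x)"
        using one_St[OF oT x] gm_in x cr[OF oT] by (simp add: gp_iff cring.cring_simprules)
    next
      fix A B C assume "A \<in> carrier (St x)" "B \<in> carrier (St x)" "C \<in> carrier (St x)"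
      then obtain T a b c where t: "openin X T" "x \<in> T" "a \<in> carrier (S T)" "b \<in> carrier (S T)"
        "c \<in> carrier (S T)" "A = gm x T a" "B = gm x T b" "C = gm x T c" by (rule common3)
      interpret cring "S T" using cr t by blast
      show "A \<otimes>\<^bsub>St x\<^esub> B \<otimes>\<^bsub>St x\<^esub> C = A \<otimes>\<^bsub>St x\<^esub> (B \<otimes>\<^bsub>St x\<^esub> C)"
        using t mult_same by (simp add: m_assoc)
    next
      fix A assume "A \<in> carrier (St x)"
      then obtain T a where t: "openin X T" "x \<in> T" "a \<in> carrier (S T)" "A = gm x T a"
        by (rule St_cases)
      interpret cring "S T" using cr t by blast
      show "\<one>\<^bsub>St x\<^esub> \<otimes>\<^bsub>St x\<^esub> A = A" using t mult_same one_St by simp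
    qed
  next
    fix A B C assume "A \<in> carrier (St x)" "B \<in> carrier (St x)" "C \<in> carrier (St x)"
    then obtain T a b c where t: "openin X T" "x \<in> T" "a \<in> carrier (S T)" "b \<in> carrier (S T)"
      "c \<in> carrier (S T)" "A = gm x T a" "B = gm x T b" "C = gm x T c" by (rule common3)
    interpret cring "S T" using cr t by blast
    show "(A \<oplus>\<^bsub>St x\<^esub> B) \<otimes>\<^bsub>St x\<^esub> C = A \<otimes>\<^bsub>St x\<^esub> C \<oplus>\<^bsub>St x\<^esub> B \<otimes>\<^bsub>St x\<^esub> C"
      using t mult_same add_same by (simp add: l_distr)
  qed
qed

lemma unit_St:
  assumes x: "x \<in> topspace X" and g: "(U, s) \<in> GP x"
  shows "gm x U s \<in> Units (St x) \<longleftrightarrow> (\<exists>W. openin X W \<and> x \<in> W \<and> W \<subseteq> U \<and> \<rho> U W s \<in> Units (S W))"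
proof
  assume "\<exists>W. openin X W \<and> x \<in> W \<and> W \<subseteq> U \<and> \<rho> U W s \<in> Units (S W)"
  then obtain W where W: "openin X W" "x \<in> W" "W \<subseteq> U" "\<rho> U W s \<in> Units (S W)" by blast
  interpret cring "S W" using cr W by blast
  let ?u = "\<rho> U W s"
  have e: "gm x U s = gm x W ?u" using gm_restr[OF g W(1-3)] by simp
  have uc: "?u \<in> carrier (S W)" using W by blast
  have ic: "inv\<^bsub>S W\<^esub> ?u \<in> carrier (S W)" using W by blast
  have "gm x W (inv\<^bsub>S W\<^esub> ?u) \<otimes>\<^bsub>St x\<^esub> gm x W ?u = \<one>\<^bsub>St x\<^esub>"
    "gm x W ?u \<otimes>\<^bsub>St x\<^esub> gm x W (inv\<^bsub>S W\<^esub> ?u) = \<one>\<^bsub>St x\<^esub>"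
    using mult_same[OF W(1,2) ic uc] mult_same[OF W(1,2) uc ic] one_St[OF W(1,2)] W(4) by simp_all
  moreover have "gm x W ?u \<in> carrier (St x)" "gm x W (inv\<^bsub>S W\<^esub> ?u) \<in> carrier (St x)"
    using W uc ic gm_in by (auto simp: gp_iff)
  ultimately show "gm x U s \<in> Units (St x)" unfolding e Units_def by blast
next
  assume u: "gm x U s \<in> Units (St x)"
  then obtain B where B: "B \<in> carrier (St x)" "gm x U s \<otimes>\<^bsub>St x\<^esub> B = \<one>\<^bsub>St x\<^esub>"
    unfolding Units_def by blast
  obtain V t where v: "openin X V" "x \<in> V" "t \<in> carrier (S V)" "B = gm x V t"
    by (rule St_cases[OF B(1)])
  have o: "openin X U" "x \<in> U" "s \<in> carrier (S U)" using g by (auto simp: gp_iff)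
  let ?T = "U \<inter> V"
  have oT: "openin X ?T" "x \<in> ?T" using o v by auto
  let ?a = "\<rho> U ?T s" and ?b = "\<rho> V ?T t"
  have ab: "?a \<in> carrier (S ?T)" "?b \<in> carrier (S ?T)" using rcar[OF o(1) oT(1) Int_lower1 o(3)] rcar[OF v(1) oT(1) Int_lower2 v(3)] by auto
  interpret T: cring "S ?T" using cr oT by blast
  have "gm x ?T (?a \<otimes>\<^bsub>S ?T\<^esub> ?b) = gm x ?T \<one>\<^bsub>S ?T\<^esub>"
    using B mult_gm[OF g, of V t] v one_St[OF oT] by (simp add: gp_iff)
  then obtain W where W: "openin X W" "x \<in> W" "W \<subseteq> ?T" "\<rho> ?T W (?a \<otimes>\<^bsub>S ?T\<^esub> ?b) = \<rho> ?T W \<one>\<^bsub>S ?T\<^esub>"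
    using gm_eq_iff[of ?T "?a \<otimes>\<^bsub>S ?T\<^esub> ?b" x ?T "\<one>\<^bsub>S ?T\<^esub>"] oT ab by (auto simp: gp_iff gr_iff)
  interpret W: cring "S W" using cr W by blast
  have e: "\<rho> ?T W ?a = \<rho> U W s" using rcomp[of U ?T W s] o oT W by auto
  have m: "\<rho> U W s \<otimes>\<^bsub>S W\<^esub> \<rho> ?T W ?b = \<one>\<^bsub>S W\<^esub>"
    using W(4) rmult[OF oT(1) W(1) W(3) ab] rone[OF oT(1) W(1) W(3)] e by simp
  have c: "\<rho> U W s \<in> carrier (S W)" "\<rho> ?T W ?b \<in> carrier (S W)" using rcar[OF o(1) W(1) _ o(3)] rcar[OF oT(1) W(1) W(3) ab(2)] W(3) by auto
  have m2: "\<rho> ?T W ?b \<otimes>\<^bsub>S W\<^esub> \<rho> U W s = \<one>\<^bsub>S W\<^esub>" using m W.m_comm[OF c] by simp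
  have "\<rho> U W s \<in> Units (S W)" using c m m2 unfolding Units_def by blast
  then show "\<exists>W. openin X W \<and> x \<in> W \<and> W \<subseteq> U \<and> \<rho> U W s \<in> Units (S W)" using W by blast
qed

end


locale asch = psh X S \<rho> for X :: "'a topology" and S :: "'a set \<Rightarrow> 'r ring" and \<rho> +
  fixes \<beta> :: "'a set \<Rightarrow> 'r set \<Rightarrow> 'a set"
  assumes asch: "A_scheme X S \<rho> \<beta>"
begin

lemma coh: "coherent_space X" using conjunct1[OF asch[unfolded A_scheme_def]] .
lemma sheaf: "sheaf_of_crings X S \<rho>" using conjunct1[OF conjunct2[OF asch[unfolded A_scheme_def]]] .

lemmas AU = mp[OF spec[OF conjunct2[OF conjunct2[OF asch[unfolded A_scheme_def]]]]]

lemma shrink: "openin X W \<Longrightarrow> x \<in> W \<Longrightarrow> \<exists>T. qc_open X T \<and> x \<in> T \<and> T \<subseteq> W"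
  using conjunct2[OF conjunct2[OF conjunct2[OF coh[unfolded coherent_space_def]]]] by blast

lemma qc_openin: "qc_open X U \<Longrightarrow> openin X U" by (simp add: qc_open_def)

lemma b_C: "qc_open X U \<Longrightarrow> fg_ideal (S U) I \<Longrightarrow> \<beta> U I \<in> C_cpt X U"
  using conjunct1[OF AU[of U]] by blast
lemma b_add: "qc_open X U \<Longrightarrow> fg_ideal (S U) I \<Longrightarrow> fg_ideal (S U) J \<Longrightarrow>
    \<beta> U (set_add (S U) I J) = \<beta> U I \<inter> \<beta> U J"
  using conjunct1[OF conjunct2[OF conjunct2[OF AU[of U]]]] by blast
lemma b_zero: "qc_open X U \<Longrightarrow> \<beta> U {\<zero>\<^bsub>S U\<^esub>} = U"
  using conjunct1[OF conjunct2[OF conjunct2[OF conjunct2[OF AU[of U]]]]] by blast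
lemma b_one: "qc_open X U \<Longrightarrow> \<beta> U (carrier (S U)) = {}"
  using conjunct1[OF conjunct2[OF conjunct2[OF conjunct2[OF conjunct2[OF AU[of U]]]]]] by blast
lemma b_restr: "qc_open X U \<Longrightarrow> qc_open X V \<Longrightarrow> V \<subseteq> U \<Longrightarrow> fg_ideal (S U) I \<Longrightarrow>
    \<beta> V (Idl\<^bsub>S V\<^esub> (\<rho> U V ` I)) = \<beta> U I \<inter> V"
  using conjunct2[OF conjunct2[OF conjunct2[OF conjunct2[OF conjunct2[OF AU[of U]]]]]] by blast
lemma b_loc: "qc_open X U \<Longrightarrow> qc_open X V \<Longrightarrow> V \<subseteq> U \<Longrightarrow> a \<in> carrier (S U) \<Longrightarrow>
    \<beta> U (PIdl\<^bsub>S U\<^esub> a) \<subseteq> U - V \<Longrightarrow> \<rho> U V a \<in> Units (S V)"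
  using conjunct2[OF conjunct2[OF conjunct2[OF conjunct2[OF conjunct2[OF AU[of U]]]]]] by blast

lemma b_sub: "qc_open X U \<Longrightarrow> fg_ideal (S U) I \<Longrightarrow> \<beta> U I \<subseteq> U"
  using b_C[of U I] closedin_subset unfolding C_cpt_def by fastforce

lemma b_mono:
  assumes "qc_open X U" "fg_ideal (S U) I" "fg_ideal (S U) J" "I \<subseteq> J"
  shows "\<beta> U J \<subseteq> \<beta> U I"
proof -
  interpret cring "S U" using cr qc_openin assms(1) by blast
  have "I <+>\<^bsub>S U\<^esub> J = J" using set_add_mono_eq assms unfolding fg_ideal_def by blast
  then show ?thesis using b_add[OF assms(1-3)] by auto
qed

lemma unit_beta:
  assumes U: "qc_open X U" and x: "x \<in> U" and s: "s \<in> carrier (S U)"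
  shows "gm x U s \<in> Units (St x) \<longleftrightarrow> x \<notin> \<beta> U (PIdl\<^bsub>S U\<^esub> s)"
proof -
  have oU: "openin X U" using U qc_openin by blast
  have xt: "x \<in> topspace X" using oU x openin_subset by blast
  have g: "(U, s) \<in> GP x" using oU x s by (simp add: gp_iff)
  interpret R: cring "S U" using cr oU by blast
  have fg: "fg_ideal (S U) (PIdl\<^bsub>S U\<^esub> s)" using R.fg_PIdl s by blast
  show ?thesis
  proof
    assume "x \<notin> \<beta> U (PIdl\<^bsub>S U\<^esub> s)"
    obtain Z where Z: "Z = \<beta> U (PIdl\<^bsub>S U\<^esub> s)" by blast
    have "closedin (subtopology X U) Z" using b_C[OF U fg] Z by (simp add: C_cpt_def)
    then obtain C where C: "closedin X C" "Z = C \<inter> U" unfolding closedin_subtopology by blast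
    have "openin X (U - C)" using openin_diff[OF oU C(1)] .
    moreover have "x \<in> U - C" using x C \<open>x \<notin> \<beta> U (PIdl\<^bsub>S U\<^esub> s)\<close> Z by blast
    ultimately obtain W where W: "qc_open X W" "x \<in> W" "W \<subseteq> U - C" using shrink by blast
    have "\<beta> U (PIdl\<^bsub>S U\<^esub> s) \<subseteq> U - W" using W C Z by blast
    then have "\<rho> U W s \<in> Units (S W)" using b_loc[OF U W(1) _ s] W by blast
    then show "gm x U s \<in> Units (St x)"
      using unit_St[OF xt g] W qc_openin by blast
  next
    assume "gm x U s \<in> Units (St x)"
    then obtain W0 where W0: "openin X W0" "x \<in> W0" "W0 \<subseteq> U" "\<rho> U W0 s \<in> Units (S W0)"
      using unit_St[OF xt g] by blast
    obtain W where W: "qc_open X W" "x \<in> W" "W \<subseteq> W0" using shrink W0 by blast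
    have oW: "openin X W" using W qc_openin by blast
    have "\<rho> W0 W (\<rho> U W0 s) \<in> Units (S W)" using ring_hom_Units[OF hom[OF W0(1) oW W(3)] W0(4)] .
    then have u: "\<rho> U W s \<in> Units (S W)" using rcomp[OF oU W0(1) oW W(3) W0(3) s] by simp
    interpret RW: cring "S W" using cr oW by blast
    have "Idl\<^bsub>S W\<^esub> (\<rho> U W ` (PIdl\<^bsub>S U\<^esub> s)) = PIdl\<^bsub>S W\<^esub> (\<rho> U W s)"
      using PIdl_image_hom[OF R.is_cring RW.is_cring hom[OF oU oW] s] W W0 by auto
    also have "\<dots> = carrier (S W)" using RW.PIdl_unit u by blast
    finally have "\<beta> U (PIdl\<^bsub>S U\<^esub> s) \<inter> W = {}"
      using b_restr[OF U W(1) _ fg] b_one[OF W(1)] W W0 by auto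
    then show "x \<notin> \<beta> U (PIdl\<^bsub>S U\<^esub> s)" using W by blast
  qed
qed

lemma mem_beta_PIdl:
  assumes U: "qc_open X U" and s: "s \<in> carrier (S U)"
  shows "x \<in> \<beta> U (PIdl\<^bsub>S U\<^esub> s) \<longleftrightarrow> x \<in> U \<and> gm x U s \<notin> Units (St x)"
proof -
  interpret R: cring "S U" using cr qc_openin U by blast
  show ?thesis using unit_beta[OF U _ s] b_sub[OF U R.fg_PIdl[OF s]] by blast
qed

lemma nonzero:
  assumes x: "x \<in> topspace X"
  shows "\<one>\<^bsub>St x\<^esub> \<noteq> \<zero>\<^bsub>St x\<^esub>"
proof
  assume e: "\<one>\<^bsub>St x\<^esub> = \<zero>\<^bsub>St x\<^esub>"
  obtain T where T: "qc_open X T" "x \<in> T" using shrink[of "topspace X" x] x by auto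
  have oT: "openin X T" using T qc_openin by blast
  interpret R: cring "S T" using cr oT by blast
  interpret St: cring "St x" using cring_St x by blast
  have "\<zero>\<^bsub>St x\<^esub> \<in> Units (St x)" using e[symmetric] by simp
  then have "gm x T \<zero>\<^bsub>S T\<^esub> \<in> Units (St x)" using zero_St[OF oT T(2)] by simp
  then have "x \<notin> \<beta> T {\<zero>\<^bsub>S T\<^esub>}" using unit_beta[OF T(1) T(2) R.zero_closed] R.PIdl_zero by simp
  then show False using b_zero[OF T(1)] T by simp
qed

lemma add_nonunit:
  assumes x: "x \<in> topspace X" and A: "A \<in> carrier (St x) - Units (St x)" and B: "B \<in> carrier (St x) - Units (St x)"
  shows "A \<oplus>\<^bsub>St x\<^esub> B \<notin> Units (St x)"
proof -
  have Ac: "A \<in> carrier (St x)" and Bc: "B \<in> carrier (St x)" using A B by auto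
  obtain T0 a0 b0 where t0: "openin X T0" "x \<in> T0" "a0 \<in> carrier (S T0)" "b0 \<in> carrier (S T0)"
    "A = gm x T0 a0" "B = gm x T0 b0" by (rule common2[OF Ac Bc])
  obtain T where T: "qc_open X T" "x \<in> T" "T \<subseteq> T0" using shrink t0 by blast
  have oT: "openin X T" using T qc_openin by blast
  define a where "a = \<rho> T0 T a0"
  define b where "b = \<rho> T0 T b0"
  have ab: "a \<in> carrier (S T)" "b \<in> carrier (S T)" using rcar[OF t0(1) oT T(3) t0(3)] rcar[OF t0(1) oT T(3) t0(4)] by (auto simp: a_def b_def)
  have eA: "A = gm x T a" "B = gm x T b"
    using gm_restr[of T0 a0 x T] gm_restr[of T0 b0 x T] t0 oT T by (auto simp: gp_iff a_def b_def)
  interpret R: cring "S T" using cr oT by blast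
  have xa: "x \<in> \<beta> T (PIdl\<^bsub>S T\<^esub> a)" using unit_beta[OF T(1,2) ab(1)] A eA by blast
  have xb: "x \<in> \<beta> T (PIdl\<^bsub>S T\<^esub> b)" using unit_beta[OF T(1,2) ab(2)] B eA by blast
  have fa: "fg_ideal (S T) (PIdl\<^bsub>S T\<^esub> a)" and fb: "fg_ideal (S T) (PIdl\<^bsub>S T\<^esub> b)"
    using R.fg_PIdl ab by auto
  have fab: "fg_ideal (S T) (PIdl\<^bsub>S T\<^esub> a <+>\<^bsub>S T\<^esub> PIdl\<^bsub>S T\<^esub> b)" using R.fg_set_add fa fb by blast
  have fs: "fg_ideal (S T) (PIdl\<^bsub>S T\<^esub> (a \<oplus>\<^bsub>S T\<^esub> b))" using R.fg_PIdl ab by auto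
  have "a \<oplus>\<^bsub>S T\<^esub> b \<in> PIdl\<^bsub>S T\<^esub> a <+>\<^bsub>S T\<^esub> PIdl\<^bsub>S T\<^esub> b"
    unfolding set_add_def' using R.cgenideal_self[OF ab(1)] R.cgenideal_self[OF ab(2)] by blast
  then have "PIdl\<^bsub>S T\<^esub> (a \<oplus>\<^bsub>S T\<^esub> b) \<subseteq> PIdl\<^bsub>S T\<^esub> a <+>\<^bsub>S T\<^esub> PIdl\<^bsub>S T\<^esub> b"
    using R.cgenideal_minimal fab unfolding fg_ideal_def by blast
  then have "\<beta> T (PIdl\<^bsub>S T\<^esub> a <+>\<^bsub>S T\<^esub> PIdl\<^bsub>S T\<^esub> b) \<subseteq> \<beta> T (PIdl\<^bsub>S T\<^esub> (a \<oplus>\<^bsub>S T\<^esub> b))"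
    using b_mono[OF T(1) fs fab] by blast
  then have "x \<in> \<beta> T (PIdl\<^bsub>S T\<^esub> (a \<oplus>\<^bsub>S T\<^esub> b))" using b_add[OF T(1) fa fb] xa xb by blast
  then have "gm x T (a \<oplus>\<^bsub>S T\<^esub> b) \<notin> Units (St x)" using unit_beta[OF T(1,2)] ab by blast
  then show ?thesis using eA add_same[OF oT T(2) ab] by simp
qed

lemma local_St:
  assumes x: "x \<in> topspace X"
  shows "local_ring (St x) \<and> max_ideal (St x) = carrier (St x) - Units (St x)"
  using local_ring_crit[OF cring_St[OF x] nonzero[OF x]] add_nonunit[OF x] by blast

lemma LRCoh: "LRCoh_object X S \<rho>"
  unfolding LRCoh_object_def locally_ringed_space_def using coh sheaf local_St by blast

lemma beta_Idl:
  assumes U: "qc_open X U" and G: "finite G" "G \<subseteq> carrier (S U)"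
  shows "\<beta> U (Idl\<^bsub>S U\<^esub> G) = U \<inter> (\<Inter>g\<in>G. \<beta> U (PIdl\<^bsub>S U\<^esub> g))"
  using G
proof (induction G rule: finite_induct)
  interpret R: cring "S U" using cr qc_openin U by blast
  case empty
  then show ?case using R.Idl_empty b_zero[OF U] by simp
next
  interpret R: cring "S U" using cr qc_openin U by blast
  case (insert a G)
  have fG: "fg_ideal (S U) (Idl\<^bsub>S U\<^esub> G)"
    unfolding fg_ideal_def using insert R.genideal_ideal by auto
  have "\<beta> U (Idl\<^bsub>S U\<^esub> (insert a G)) = \<beta> U (PIdl\<^bsub>S U\<^esub> a) \<inter> \<beta> U (Idl\<^bsub>S U\<^esub> G)"
    using R.Idl_insert[of a G] insert b_add[OF U R.fg_PIdl fG] by auto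
  then show ?case using insert b_sub[OF U R.fg_PIdl[of a]] by auto
qed

end


lemma asch_intro:
  assumes "A_scheme X S \<rho> \<beta>" shows "asch X S \<rho> \<beta>"
proof -
  have "sheaf_of_crings X S \<rho>" using conjunct1[OF conjunct2[OF assms[unfolded A_scheme_def]]] .
  then have "presheaf_of_crings X S \<rho>" unfolding sheaf_of_crings_def by (rule conjunct1)
  then show ?thesis using assms by (simp add: asch_def psh_def asch_axioms_def)
qed

lemma preimage_open: "continuous_map X Y f \<Longrightarrow> openin Y V \<Longrightarrow> openin X (f -` V \<inter> topspace X)"
proof -
  assume "continuous_map X Y f" "openin Y V"
  then have "openin X {x \<in> topspace X. f x \<in> V}" by (rule openin_continuous_map_preimage)
  moreover have "{x \<in> topspace X. f x \<in> V} = f -` V \<inter> topspace X" by auto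
  ultimately show ?thesis by simp
qed

locale two = X: asch X OX \<rho>X \<beta>X + Y: asch Y OY \<rho>Y \<beta>Y
  for X :: "'a topology" and OX :: "'a set \<Rightarrow> 'r ring" and \<rho>X \<beta>X
    and Y :: "'b topology" and OY :: "'b set \<Rightarrow> 's ring" and \<rho>Y \<beta>Y
begin

context
  fixes f :: "'a \<Rightarrow> 'b" and \<phi> :: "'b set \<Rightarrow> 's \<Rightarrow> 'r"
  assumes m: "ringed_space_morphism X OX \<rho>X Y OY \<rho>Y f \<phi>"
begin

lemma cont: "continuous_map X Y f" using m unfolding ringed_space_morphism_def by blast
lemma phom: "openin Y V \<Longrightarrow> \<phi> V \<in> ring_hom (OY V) (OX (f -` V \<inter> topspace X))"
  using m unfolding ringed_space_morphism_def by blast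
lemma pcomp: "openin Y V \<Longrightarrow> openin Y W \<Longrightarrow> W \<subseteq> V \<Longrightarrow> t \<in> carrier (OY V) \<Longrightarrow>
   \<phi> W (\<rho>Y V W t) = \<rho>X (f -` V \<inter> topspace X) (f -` W \<inter> topspace X) (\<phi> V t)"
  using m unfolding ringed_space_morphism_def by blast

lemma fx: "x \<in> topspace X \<Longrightarrow> f x \<in> topspace Y"
  using continuous_map_image_subset_topspace[OF cont] by blast

lemma pre_gp: "x \<in> topspace X \<Longrightarrow> (V, t) \<in> Y.GP (f x) \<Longrightarrow> (f -` V \<inter> topspace X, \<phi> V t) \<in> X.GP x"
  using preimage_open[OF cont] ring_hom_closed[OF phom] by (auto simp: X.gp_iff Y.gp_iff)

lemma smap_gm:
  assumes x: "x \<in> topspace X" and g: "(V, t) \<in> Y.GP (f x)"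
  shows "stalk_map X OX \<rho>X f \<phi> x (Y.gm (f x) V t) = X.gm x (f -` V \<inter> topspace X) (\<phi> V t)"
proof -
  obtain V' t' where 1: "(SOME p. p \<in> Y.gm (f x) V t) = (V', t')" "(V', t') \<in> Y.GP (f x)"
    "Y.gm (f x) V' t' = Y.gm (f x) V t" by (rule Y.some_rep[OF g])
  from 1 g obtain W where W: "openin Y W" "f x \<in> W" "W \<subseteq> V' \<inter> V" "\<rho>Y V' W t' = \<rho>Y V W t"
    using Y.gm_eq_iff[OF 1(2) g] Y.gr_iff[of V' t' V t "f x"] by blast
  have o: "openin Y V" "openin Y V'" "t \<in> carrier (OY V)" "t' \<in> carrier (OY V')"
    using g 1 by (auto simp: Y.gp_iff)
  have "X.gm x (f -` V' \<inter> topspace X) (\<phi> V' t') = X.gm x (f -` V \<inter> topspace X) (\<phi> V t)"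
  proof (rule X.gm_eqI[OF pre_gp[OF x 1(2)] pre_gp[OF x g]])
    show "openin X (f -` W \<inter> topspace X)" using preimage_open[OF cont W(1)] .
    show "x \<in> f -` W \<inter> topspace X" using x W by auto
    show "f -` W \<inter> topspace X \<subseteq> (f -` V' \<inter> topspace X) \<inter> (f -` V \<inter> topspace X)" using W by auto
    have "\<rho>X (f -` V' \<inter> topspace X) (f -` W \<inter> topspace X) (\<phi> V' t') = \<phi> W (\<rho>Y V' W t')"
      using pcomp[of V' W t'] o W by auto
    also have "\<dots> = \<phi> W (\<rho>Y V W t)" using W by simp
    also have "\<dots> = \<rho>X (f -` V \<inter> topspace X) (f -` W \<inter> topspace X) (\<phi> V t)"
      using pcomp[of V W t] o W by auto
    finally show "\<rho>X (f -` V' \<inter> topspace X) (f -` W \<inter> topspace X) (\<phi> V' t') =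
       \<rho>X (f -` V \<inter> topspace X) (f -` W \<inter> topspace X) (\<phi> V t)" .
  qed
  then show ?thesis using 1 by (simp add: stalk_map_def)
qed

lemma smap_hom:
  assumes x: "x \<in> topspace X"
  shows "stalk_map X OX \<rho>X f \<phi> x \<in> ring_hom (Y.St (f x)) (X.St x)"
proof -
  let ?h = "stalk_map X OX \<rho>X f \<phi> x"
  have fxt: "f x \<in> topspace Y" using fx x .
  have cl: "?h A \<in> carrier (X.St x)" if Ain: "A \<in> carrier (Y.St (f x))" for A
  proof -
    obtain V t where v: "openin Y V" "f x \<in> V" "t \<in> carrier (OY V)" "A = Y.gm (f x) V t"
      by (rule Y.St_cases[OF Ain])
    then have g: "(V, t) \<in> Y.GP (f x)" by (simp add: Y.gp_iff)
    show ?thesis using smap_gm[OF x g] X.gm_in[OF pre_gp[OF x g]] v by simp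
  qed
  have bin: "?h (A \<otimes>\<^bsub>Y.St (f x)\<^esub> B) = ?h A \<otimes>\<^bsub>X.St x\<^esub> ?h B \<and>
             ?h (A \<oplus>\<^bsub>Y.St (f x)\<^esub> B) = ?h A \<oplus>\<^bsub>X.St x\<^esub> ?h B"
    if AB: "A \<in> carrier (Y.St (f x))" "B \<in> carrier (Y.St (f x))" for A B
  proof -
    obtain T a b where t: "openin Y T" "f x \<in> T" "a \<in> carrier (OY T)" "b \<in> carrier (OY T)"
      "A = Y.gm (f x) T a" "B = Y.gm (f x) T b" by (rule Y.common2[OF AB])
    interpret RT: cring "OY T" using Y.cr t by blast
    let ?U = "f -` T \<inter> topspace X"
    have oU: "openin X ?U" "x \<in> ?U" using preimage_open[OF cont t(1)] x t by auto
    have ph: "\<phi> T \<in> ring_hom (OY T) (OX ?U)" using phom t by blast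
    have pc: "\<phi> T a \<in> carrier (OX ?U)" "\<phi> T b \<in> carrier (OX ?U)" using ring_hom_closed[OF ph] t by blast+
    have ga: "(T, a) \<in> Y.GP (f x)" "(T, b) \<in> Y.GP (f x)" "(T, a \<otimes>\<^bsub>OY T\<^esub> b) \<in> Y.GP (f x)"
      "(T, a \<oplus>\<^bsub>OY T\<^esub> b) \<in> Y.GP (f x)" using t by (auto simp: Y.gp_iff)
    show ?thesis
      using Y.mult_same[OF t(1-4)] Y.add_same[OF t(1-4)] smap_gm[OF x ga(1)] smap_gm[OF x ga(2)]
        smap_gm[OF x ga(3)] smap_gm[OF x ga(4)] X.mult_same[OF oU pc] X.add_same[OF oU pc]
        ring_hom_mult[OF ph t(3,4)] ring_hom_add[OF ph t(3,4)] t(5,6) by simp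
  qed
  have one: "?h \<one>\<^bsub>Y.St (f x)\<^esub> = \<one>\<^bsub>X.St x\<^esub>"
  proof -
    have oY: "openin Y (topspace Y)" by simp
    have g: "(topspace Y, \<one>\<^bsub>OY (topspace Y)\<^esub>) \<in> Y.GP (f x)"
      using fxt Y.cr[OF oY] by (simp add: Y.gp_iff cring.cring_simprules)
    have e: "f -` topspace Y \<inter> topspace X = topspace X" using fx by auto
    have "\<phi> (topspace Y) \<one>\<^bsub>OY (topspace Y)\<^esub> = \<one>\<^bsub>OX (topspace X)\<^esub>"
      using ring_hom_one[OF phom[OF oY]] e by simp
    then show ?thesis
      using Y.one_St[OF oY fxt] smap_gm[OF x g] e X.one_St[of "topspace X" x] x by simp
  qed
  show ?thesis unfolding ring_hom_def using cl bin one by auto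
qed

lemma local_iff:
  "(\<forall>x\<in>topspace X. local_ring_hom (Y.St (f x)) (X.St x) (stalk_map X OX \<rho>X f \<phi> x)) \<longleftrightarrow>
   (\<forall>x\<in>topspace X. \<forall>A\<in>carrier (Y.St (f x)). stalk_map X OX \<rho>X f \<phi> x A \<in> Units (X.St x) \<longrightarrow> A \<in> Units (Y.St (f x)))"
  using local_hom_iff[OF conjunct2[OF Y.local_St[OF fx]] conjunct2[OF X.local_St] smap_hom] by blast

context
  assumes qc: "quasi_compact_map X Y f"
begin

lemma qcU: "qc_open Y V \<Longrightarrow> qc_open X (f -` V \<inter> topspace X)"
  using qc preimage_open[OF cont] unfolding quasi_compact_map_def qc_open_def by blast

lemma beta_to_local:
  assumes b: "\<forall>V. qc_open Y V \<longrightarrow> (\<forall>I. fg_ideal (OY V) I \<longrightarrow>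
        \<beta>X (f -` V \<inter> topspace X) (Idl\<^bsub>OX (f -` V \<inter> topspace X)\<^esub> (\<phi> V ` I))
          = f -` \<beta>Y V I \<inter> topspace X)"
    and x: "x \<in> topspace X" and A: "A \<in> carrier (Y.St (f x))"
    and u: "stalk_map X OX \<rho>X f \<phi> x A \<in> Units (X.St x)"
  shows "A \<in> Units (Y.St (f x))"
proof (rule ccontr)
  assume nu: "A \<notin> Units (Y.St (f x))"
  obtain V0 t0 where v0: "openin Y V0" "f x \<in> V0" "t0 \<in> carrier (OY V0)" "A = Y.gm (f x) V0 t0"
    by (rule Y.St_cases[OF A])
  obtain V where V: "qc_open Y V" "f x \<in> V" "V \<subseteq> V0" using Y.shrink v0 by blast
  have oV: "openin Y V" using V Y.qc_openin by blast
  define t where "t = \<rho>Y V0 V t0"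
  have tc: "t \<in> carrier (OY V)" using Y.rcar[OF v0(1) oV V(3) v0(3)] by (simp add: t_def)
  have eA: "A = Y.gm (f x) V t" using Y.gm_restr[of V0 t0 "f x" V] v0 oV V by (simp add: Y.gp_iff t_def)
  have g: "(V, t) \<in> Y.GP (f x)" using oV V tc by (simp add: Y.gp_iff)
  let ?U = "f -` V \<inter> topspace X"
  have qU: "qc_open X ?U" using qcU V by blast
  have oU: "openin X ?U" using qU X.qc_openin by blast
  interpret RY: cring "OY V" using Y.cr oV by blast
  interpret RX: cring "OX ?U" using X.cr oU by blast
  have "f x \<in> \<beta>Y V (PIdl\<^bsub>OY V\<^esub> t)" using Y.unit_beta[OF V(1,2) tc] nu eA by blast
  then have "x \<in> \<beta>X ?U (Idl\<^bsub>OX ?U\<^esub> (\<phi> V ` (PIdl\<^bsub>OY V\<^esub> t)))"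
    using b V(1) RY.fg_PIdl[OF tc] x by auto
  moreover have "Idl\<^bsub>OX ?U\<^esub> (\<phi> V ` (PIdl\<^bsub>OY V\<^esub> t)) = PIdl\<^bsub>OX ?U\<^esub> (\<phi> V t)"
    using PIdl_image_hom[OF RY.is_cring RX.is_cring phom[OF oV] tc] .
  ultimately have "x \<in> \<beta>X ?U (PIdl\<^bsub>OX ?U\<^esub> (\<phi> V t))" by simp
  moreover have "\<phi> V t \<in> carrier (OX ?U)" using ring_hom_closed[OF phom[OF oV] tc] .
  ultimately have "X.gm x ?U (\<phi> V t) \<notin> Units (X.St x)" using X.mem_beta_PIdl[OF qU] by blast
  then show False using u smap_gm[OF x g] eA by simp
qed

lemma local_to_beta:
  assumes l: "\<forall>x\<in>topspace X. \<forall>A\<in>carrier (Y.St (f x)). stalk_map X OX \<rho>X f \<phi> x A \<in> Units (X.St x) \<longrightarrow> A \<in> Units (Y.St (f x))"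
    and V: "qc_open Y V" and I: "fg_ideal (OY V) I"
  shows "\<beta>X (f -` V \<inter> topspace X) (Idl\<^bsub>OX (f -` V \<inter> topspace X)\<^esub> (\<phi> V ` I)) = f -` \<beta>Y V I \<inter> topspace X"
proof -
  let ?U = "f -` V \<inter> topspace X"
  have qU: "qc_open X ?U" using qcU V by blast
  have oU: "openin X ?U" using qU X.qc_openin by blast
  have oV: "openin Y V" using V Y.qc_openin by blast
  interpret RY: cring "OY V" using Y.cr oV by blast
  interpret RX: cring "OX ?U" using X.cr oU by blast
  obtain G where G: "finite G" "G \<subseteq> carrier (OY V)" "I = Idl\<^bsub>OY V\<^esub> G" using I unfolding fg_ideal_def by blast
  have ph: "\<phi> V \<in> ring_hom (OY V) (OX ?U)" using phom oV by blast
  have pG: "\<phi> V ` G \<subseteq> carrier (OX ?U)" using ring_hom_closed[OF ph] G by auto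
  have "Idl\<^bsub>OX ?U\<^esub> (\<phi> V ` I) = Idl\<^bsub>OX ?U\<^esub> (\<phi> V ` G)"
    using Idl_image_hom[OF RY.is_cring RX.is_cring ph G(2)] G(3) by simp
  then have L: "\<beta>X ?U (Idl\<^bsub>OX ?U\<^esub> (\<phi> V ` I)) = ?U \<inter> (\<Inter>g\<in>G. \<beta>X ?U (PIdl\<^bsub>OX ?U\<^esub> (\<phi> V g)))"
    using X.beta_Idl[OF qU _ pG] G(1) by simp
  have R: "\<beta>Y V I = V \<inter> (\<Inter>g\<in>G. \<beta>Y V (PIdl\<^bsub>OY V\<^esub> g))"
    using Y.beta_Idl[OF V G(1,2)] G(3) by simp
  have pt: "x \<in> \<beta>X ?U (PIdl\<^bsub>OX ?U\<^esub> (\<phi> V g)) \<longleftrightarrow> f x \<in> \<beta>Y V (PIdl\<^bsub>OY V\<^esub> g)"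
    if xU: "x \<in> ?U" and gG: "g \<in> G" for x g
  proof -
    have x: "x \<in> topspace X" "f x \<in> V" using xU by auto
    have gc: "g \<in> carrier (OY V)" using gG G by blast
    have gp: "(V, g) \<in> Y.GP (f x)" using oV x gc by (simp add: Y.gp_iff)
    have pc: "\<phi> V g \<in> carrier (OX ?U)" using pG gG by blast
    have "x \<in> \<beta>X ?U (PIdl\<^bsub>OX ?U\<^esub> (\<phi> V g)) \<longleftrightarrow> X.gm x ?U (\<phi> V g) \<notin> Units (X.St x)"
      using X.mem_beta_PIdl[OF qU pc] xU by blast
    also have "\<dots> \<longleftrightarrow> stalk_map X OX \<rho>X f \<phi> x (Y.gm (f x) V g) \<notin> Units (X.St x)"
      using smap_gm[OF x(1) gp] by simp
    also have "\<dots> \<longleftrightarrow> Y.gm (f x) V g \<notin> Units (Y.St (f x))"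
      using l x(1) Y.gm_in[OF gp] ring_hom_Units[OF smap_hom[OF x(1)]] by blast
    also have "\<dots> \<longleftrightarrow> f x \<in> \<beta>Y V (PIdl\<^bsub>OY V\<^esub> g)"
      using Y.mem_beta_PIdl[OF V gc] x by blast
    finally show ?thesis .
  qed
  show ?thesis
  proof (rule Set.set_eqI)
    fix x
    show "x \<in> \<beta>X ?U (Idl\<^bsub>OX ?U\<^esub> (\<phi> V ` I)) \<longleftrightarrow> x \<in> f -` \<beta>Y V I \<inter> topspace X"
      unfolding L R using pt by auto
  qed
qed

end
end

lemma morph_iff:
  "A_scheme_morphism X OX \<rho>X \<beta>X Y OY \<rho>Y \<beta>Y f \<phi> \<longleftrightarrow> LRCoh_morphism X OX \<rho>X Y OY \<rho>Y f \<phi>"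
proof -
  have "(\<forall>V. qc_open Y V \<longrightarrow> (\<forall>I. fg_ideal (OY V) I \<longrightarrow>
        \<beta>X (f -` V \<inter> topspace X) (Idl\<^bsub>OX (f -` V \<inter> topspace X)\<^esub> (\<phi> V ` I))
          = f -` \<beta>Y V I \<inter> topspace X)) \<longleftrightarrow>
     (\<forall>x\<in>topspace X. local_ring_hom (Y.St (f x)) (X.St x) (stalk_map X OX \<rho>X f \<phi> x))"
    if m: "ringed_space_morphism X OX \<rho>X Y OY \<rho>Y f \<phi>" and qc: "quasi_compact_map X Y f"
    using local_iff[OF m] beta_to_local[OF m qc] local_to_beta[OF m qc] by blast
  then show ?thesis unfolding A_scheme_morphism_def LRCoh_morphism_def by blast
qed

end


theorem proposition2p1:
  fixes X :: "'a topology" and OX :: "'a set \<Rightarrow> 'r ring" and \<rho>X :: "'a set \<Rightarrow> 'a set \<Rightarrow> 'r \<Rightarrow> 'r"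
    and \<beta>X :: "'a set \<Rightarrow> 'r set \<Rightarrow> 'a set"
    and Y :: "'b topology" and OY :: "'b set \<Rightarrow> 's ring" and \<rho>Y :: "'b set \<Rightarrow> 'b set \<Rightarrow> 's \<Rightarrow> 's"
    and \<beta>Y :: "'b set \<Rightarrow> 's set \<Rightarrow> 'b set"
  assumes "A_scheme X OX \<rho>X \<beta>X" and "A_scheme Y OY \<rho>Y \<beta>Y"
  shows "LRCoh_object X OX \<rho>X \<and> LRCoh_object Y OY \<rho>Y \<and>
         (\<forall>f \<phi>. A_scheme_morphism X OX \<rho>X \<beta>X Y OY \<rho>Y \<beta>Y f \<phi> \<longleftrightarrow>
                 LRCoh_morphism X OX \<rho>X Y OY \<rho>Y f \<phi>)"
  proof -
  have t: "two X OX \<rho>X \<beta>X Y OY \<rho>Y \<beta>Y"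
    unfolding two_def using asch_intro[OF assms(1)] asch_intro[OF assms(2)] by blast
  show ?thesis using asch.LRCoh[OF asch_intro[OF assms(1)]] asch.LRCoh[OF asch_intro[OF assms(2)]]
    two.morph_iff[OF t] by blast
qed

end
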